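(* For any parsimonious protocol $\Pi$ on $m$ memory states, $U^R(\Pi)\le U^{RR}(p,\gamma,m)$, where \[U^{RR}(p,\gamma,m)=\begin{cases}1-\dfrac{2\sqrt{p(1-p)\gamma^{m-2}}-1}{\gamma^{m-2}-1}, & \text{if } \gamma^{m-2}>\kappa,\\[0.8em] \max\{p,1-p\}, & \text{otherwise;}\end{cases}\] the inequality is strict if $m\ge4$ and $\gamma^{m-2}>\kappa$.
   Context: Setting. The state of nature is $\theta\in\Theta=\{H,L\}$ with prior $\Pr(\theta=H)=p\in(0,1)$. A sender privately observes $\theta$; a receiver does not. $S$ is a finite signal set; conditional on $\theta$, signals are i.i.d. with distribution $\pi_\theta$ on $S$, where $\pi_\theta(s)>0$ for all $s\in S,\theta\in\Theta$, and $\pi_H\neq\pi_L$. The receiver has the set of memory states $M=\{1,\dots,m\}$ and chooses a protocol $\Pi=(f,g,a)$: a transition function $f:M\times S\to\Delta(M)$ ($f(i,s)(j)$ is the probability of moving from memory state $i$ to $j$ after signal $s$), an initial distribution $g\in\Delta(M)$ of $m_0$, and an action rule $a:M\to[0,1]$ (probability of action $H$ if the game ends in that memory state). A sender strategy is $\sigma:M\times\Theta\to[0,1]$, the probability of stopping in the current memory state given $\theta$. Timing: $m_0\sim g$; in each period $t=0,1,\dots$, with current memory state $m_t$, the game ends if $m_t$ is absorbing ($f(m_t,s)(m_t)=1$ for all $s$); otherwise the sender stops with probability $\sigma(m_t,\theta)$, ending the game; if not stopped, a signal $s_t\sim\pi_\theta$ is generated and $m_{t+1}\sim f(m_t,s_t)$.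 When the game ends in state $m_t$ the receiver takes action $H$ with probability $a(m_t)$ and $L$ otherwise. The receiver's payoff is $1$ if the action equals $\theta$ and $0$ otherwise; the sender's payoff is $1$ if the action is $H$ and $0$ otherwise; there is no discounting; if the game never ends both get $0$. $U^R(\Pi):=U^R(\Pi,\sigma)$ for a sender best response $\sigma$. Absorbing/transient refer to the Markov chain on $M$ induced by $f$ with signals from $\pi_\theta$ (by full support this does not depend on $\theta$). A protocol is parsimonious if (i) it has exactly two absorbing memory states, one with $a=0$ and one with $a=1$, and (ii) all other memory states are transient with $a=0$. $\bar\ell=\max_{s}\pi_H(s)/\pi_L(s)$, $\underline\ell=\min_{s}\pi_H(s)/\pi_L(s)$, $\gamma=\bar\ell/\underline\ell\in(1,\infty)$; $\kappa=\max\{p/(1-p),(1-p)/p\}$. *)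

theory Defs
  imports Complex_Main
begin

text \<open>Memory states are 0,...,m-1 (the paper's 1,...,m). The state of nature is
  encoded as bool: True = H, False = L.
  A protocol is a triple (f, g, a); f i s k = probability of moving from i to k
  after signal s.\<close>

definition valid_signal_dist :: "('s::finite \<Rightarrow> real) \<Rightarrow> bool" where
  "valid_signal_dist \<pi> \<longleftrightarrow> (\<forall>s. \<pi> s > 0) \<and> (\<Sum>s\<in>UNIV. \<pi> s) = 1"

definition valid_protocol ::
  "nat \<Rightarrow> (nat \<Rightarrow> 's::finite \<Rightarrow> nat \<Rightarrow> real) \<Rightarrow> (nat \<Rightarrow> real) \<Rightarrow> (nat \<Rightarrow> real) \<Rightarrow> bool" where
  "valid_protocol m f g a \<longleftrightarrow>
     (\<forall>i<m. \<forall>s. (\<forall>k<m. f i s k \<ge> 0) \<and> (\<Sum>k<m. f i s k) = 1) \<and>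
     (\<forall>j<m. g j \<ge> 0) \<and> (\<Sum>j<m. g j) = 1 \<and>
     (\<forall>j<m. 0 \<le> a j \<and> a j \<le> 1)"

definition absorbing :: "(nat \<Rightarrow> 's \<Rightarrow> nat \<Rightarrow> real) \<Rightarrow> nat \<Rightarrow> bool" where
  "absorbing f i \<longleftrightarrow> (\<forall>s. f i s i = 1)"

definition chain_P :: "('s::finite \<Rightarrow> real) \<Rightarrow> (nat \<Rightarrow> 's \<Rightarrow> nat \<Rightarrow> real) \<Rightarrow> nat \<Rightarrow> nat \<Rightarrow> real" where
  "chain_P \<pi> f i k = (\<Sum>s\<in>UNIV. \<pi> s * f i s k)"

definition chain_edges :: "nat \<Rightarrow> ('s::finite \<Rightarrow> real) \<Rightarrow> (nat \<Rightarrow> 's \<Rightarrow> nat \<Rightarrow> real) \<Rightarrow> (nat \<times> nat) set" where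
  "chain_edges m \<pi> f = {(i, k). i < m \<and> k < m \<and> chain_P \<pi> f i k > 0}"

text \<open>In a finite Markov chain, a state is transient iff it can reach a state
  from which it cannot be reached back.\<close>
definition transient :: "nat \<Rightarrow> ('s::finite \<Rightarrow> real) \<Rightarrow> (nat \<Rightarrow> 's \<Rightarrow> nat \<Rightarrow> real) \<Rightarrow> nat \<Rightarrow> bool" where
  "transient m \<pi> f i \<longleftrightarrow>
     (\<exists>j. (i, j) \<in> (chain_edges m \<pi> f)\<^sup>* \<and> (j, i) \<notin> (chain_edges m \<pi> f)\<^sup>*)"

definition parsimonious ::
  "nat \<Rightarrow> ('s::finite \<Rightarrow> real) \<Rightarrow> (nat \<Rightarrow> 's \<Rightarrow> nat \<Rightarrow> real) \<Rightarrow> (nat \<Rightarrow> real) \<Rightarrow> bool" where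
  "parsimonious m \<pi> f a \<longleftrightarrow>
     (\<exists>h l. h < m \<and> l < m \<and> h \<noteq> l \<and> absorbing f h \<and> absorbing f l \<and> a h = 1 \<and> a l = 0 \<and>
        (\<forall>j<m. j \<noteq> h \<and> j \<noteq> l \<longrightarrow> \<not> absorbing f j \<and> transient m \<pi> f j \<and> a j = 0))"

text \<open>cont: probability that the game is still running and in memory state k at
  period t, given the signal distribution \<pi> (of the true state) and the sender's
  stopping probabilities sg (for the true state).\<close>
fun cont :: "nat \<Rightarrow> ('s::finite \<Rightarrow> real) \<Rightarrow> (nat \<Rightarrow> 's \<Rightarrow> nat \<Rightarrow> real) \<Rightarrow> (nat \<Rightarrow> real)
              \<Rightarrow> (nat \<Rightarrow> real) \<Rightarrow> nat \<Rightarrow> nat \<Rightarrow> real" where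
  "cont m \<pi> f g sg 0 k = (if k < m then g k else 0)"
| "cont m \<pi> f g sg (Suc t) k =
     (if k < m then
        (\<Sum>j<m. (if absorbing f j then 0 else (1 - sg j) * cont m \<pi> f g sg t j * (\<Sum>s\<in>UNIV. \<pi> s * f j s k)))
      else 0)"

definition ends :: "nat \<Rightarrow> ('s::finite \<Rightarrow> real) \<Rightarrow> (nat \<Rightarrow> 's \<Rightarrow> nat \<Rightarrow> real) \<Rightarrow> (nat \<Rightarrow> real)
              \<Rightarrow> (nat \<Rightarrow> real) \<Rightarrow> nat \<Rightarrow> nat \<Rightarrow> real" where
  "ends m \<pi> f g sg t j = cont m \<pi> f g sg t j * (if absorbing f j then 1 else sg j)"

text \<open>Probability that the receiver ends up taking action H (resp. L); if the
  game never ends, no action is taken.\<close>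
definition prob_actH :: "nat \<Rightarrow> ('s::finite \<Rightarrow> real) \<Rightarrow> (nat \<Rightarrow> 's \<Rightarrow> nat \<Rightarrow> real) \<Rightarrow> (nat \<Rightarrow> real)
              \<Rightarrow> (nat \<Rightarrow> real) \<Rightarrow> (nat \<Rightarrow> real) \<Rightarrow> real" where
  "prob_actH m \<pi> f g a sg = (\<Sum>t. \<Sum>j<m. ends m \<pi> f g sg t j * a j)"

definition prob_actL :: "nat \<Rightarrow> ('s::finite \<Rightarrow> real) \<Rightarrow> (nat \<Rightarrow> 's \<Rightarrow> nat \<Rightarrow> real) \<Rightarrow> (nat \<Rightarrow> real)
              \<Rightarrow> (nat \<Rightarrow> real) \<Rightarrow> (nat \<Rightarrow> real) \<Rightarrow> real" where
  "prob_actL m \<pi> f g a sg = (\<Sum>t. \<Sum>j<m. ends m \<pi> f g sg t j * (1 - a j))"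

definition valid_strategy :: "nat \<Rightarrow> (nat \<Rightarrow> bool \<Rightarrow> real) \<Rightarrow> bool" where
  "valid_strategy m \<sigma> \<longleftrightarrow> (\<forall>j<m. \<forall>\<theta>. 0 \<le> \<sigma> j \<theta> \<and> \<sigma> j \<theta> \<le> 1)"

definition sender_payoff :: "nat \<Rightarrow> ('s::finite \<Rightarrow> real) \<Rightarrow> ('s \<Rightarrow> real) \<Rightarrow> (nat \<Rightarrow> 's \<Rightarrow> nat \<Rightarrow> real)
     \<Rightarrow> (nat \<Rightarrow> real) \<Rightarrow> (nat \<Rightarrow> real) \<Rightarrow> (nat \<Rightarrow> bool \<Rightarrow> real) \<Rightarrow> bool \<Rightarrow> real" where
  "sender_payoff m \<pi>H \<pi>L f g a \<sigma> \<theta> =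
     prob_actH m (if \<theta> then \<pi>H else \<pi>L) f g a (\<lambda>j. \<sigma> j \<theta>)"

definition sender_best_response :: "nat \<Rightarrow> ('s::finite \<Rightarrow> real) \<Rightarrow> ('s \<Rightarrow> real) \<Rightarrow> (nat \<Rightarrow> 's \<Rightarrow> nat \<Rightarrow> real)
     \<Rightarrow> (nat \<Rightarrow> real) \<Rightarrow> (nat \<Rightarrow> real) \<Rightarrow> (nat \<Rightarrow> bool \<Rightarrow> real) \<Rightarrow> bool" where
  "sender_best_response m \<pi>H \<pi>L f g a \<sigma> \<longleftrightarrow>
     valid_strategy m \<sigma> \<and>
     (\<forall>\<sigma>' \<theta>. valid_strategy m \<sigma>' \<longrightarrow>
        sender_payoff m \<pi>H \<pi>L f g a \<sigma>' \<theta> \<le> sender_payoff m \<pi>H \<pi>L f g a \<sigma> \<theta>)"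

definition receiver_payoff :: "real \<Rightarrow> nat \<Rightarrow> ('s::finite \<Rightarrow> real) \<Rightarrow> ('s \<Rightarrow> real) \<Rightarrow> (nat \<Rightarrow> 's \<Rightarrow> nat \<Rightarrow> real)
     \<Rightarrow> (nat \<Rightarrow> real) \<Rightarrow> (nat \<Rightarrow> real) \<Rightarrow> (nat \<Rightarrow> bool \<Rightarrow> real) \<Rightarrow> real" where
  "receiver_payoff p m \<pi>H \<pi>L f g a \<sigma> =
     p * prob_actH m \<pi>H f g a (\<lambda>j. \<sigma> j True) + (1 - p) * prob_actL m \<pi>L f g a (\<lambda>j. \<sigma> j False)"

definition lbar :: "('s::finite \<Rightarrow> real) \<Rightarrow> ('s \<Rightarrow> real) \<Rightarrow> real" where
  "lbar \<pi>H \<pi>L = Max ((\<lambda>s. \<pi>H s / \<pi>L s) ` UNIV)"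

definition lunder :: "('s::finite \<Rightarrow> real) \<Rightarrow> ('s \<Rightarrow> real) \<Rightarrow> real" where
  "lunder \<pi>H \<pi>L = Min ((\<lambda>s. \<pi>H s / \<pi>L s) ` UNIV)"

definition gamma :: "('s::finite \<Rightarrow> real) \<Rightarrow> ('s \<Rightarrow> real) \<Rightarrow> real" where
  "gamma \<pi>H \<pi>L = lbar \<pi>H \<pi>L / lunder \<pi>H \<pi>L"

definition kappa :: "real \<Rightarrow> real" where
  "kappa p = max (p / (1 - p)) ((1 - p) / p)"

definition URR :: "real \<Rightarrow> real \<Rightarrow> nat \<Rightarrow> real" where
  "URR p \<gamma> m =
     (if \<gamma> ^ (m - 2) > kappa p
      then 1 - (2 * sqrt (p * (1 - p) * \<gamma> ^ (m - 2)) - 1) / (\<gamma> ^ (m - 2) - 1)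
      else max p (1 - p))"

end

theory Submission
  imports Defs
begin


lemma top_alg:
  fixes NHt A B C Xh v1 v2 lo hi :: real
  assumes A0: "A \<ge> 0" and B0: "B \<ge> 0" and C0: "C \<ge> 0" and AB: "A + B > 0"
    and lo0: "0 < lo" and lohi: "lo < hi" and v10: "v1 \<ge> 0" and v20: "v2 > 0"
    and h1: "NHt \<le> Xh + hi*v2*B" and h2: "Xh + lo*v1*C \<le> hi*v2*(A+C)"
    and h3: "Xh \<le> hi*v1*A" and h4: "lo*v1*A \<le> Xh"
  shows "lo*NHt < hi*hi*v2*(A+B)"
proof (rule ccontr)
  assume neg: "\<not> lo*NHt < hi*hi*v2*(A+B)"
  then have neg': "hi*hi*v2*(A+B) \<le> lo*NHt" by simp
  have hv: "hi * v2 > 0" using lo0 lohi v20 by simp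
  have "lo*NHt \<le> lo*(Xh + hi*v2*B)" using h1 lo0 by (intro mult_left_mono) auto
  then have l1: "lo*NHt \<le> lo*Xh + lo*(hi*v2*B)" by (simp add: distrib_left)
  show False
  proof (cases "A + C = 0")
    case True
    then have "A = 0" "C = 0" using A0 C0 by auto
    then have "Xh \<le> 0" using h3 by simp
    then have "lo*Xh \<le> 0" using lo0 by (simp add: mult_nonneg_nonpos)
    then have "lo*NHt \<le> lo*(hi*v2*B)" using l1 by linarith
    moreover have "B > 0" using AB \<open>A = 0\<close> by simp
    then have "lo*(hi*v2*B) < hi*(hi*v2*B)" using lohi hv by (intro mult_strict_right_mono) auto
    ultimately show False using neg' \<open>A = 0\<close> by (simp add: algebra_simps)
  next
    case False
    then have ACp: "A + C > 0" using A0 C0 by simp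
    have "lo*v1*(A+C) \<le> hi*v2*(A+C)" using h2 h4 by (simp add: algebra_simps)
    then have lv: "lo*v1 \<le> hi*v2" using ACp by simp
    have "lo*Xh \<le> lo*(hi*v1*A)" using h3 lo0 by simp
    also have "\<dots> = hi*((lo*v1)*A)" by (simp add: algebra_simps)
    also have "\<dots> \<le> hi*((hi*v2)*A)" using lv A0 lohi lo0 by (intro mult_left_mono mult_right_mono) auto
    finally have "lo*NHt \<le> hi*hi*v2*A + lo*(hi*v2*B)" using l1 by (simp add: algebra_simps)
    then have "hi*(hi*v2*B) \<le> lo*(hi*v2*B)" using neg' by (simp add: algebra_simps)
    then have "(hi - lo) * (hi*v2*B) \<le> 0" by (simp add: algebra_simps)
    moreover have "hi - lo > 0" using lohi by simp
    ultimately have "hi*v2*B \<le> 0" by (simp add: mult_le_0_iff)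
    then have "\<not> B > 0" using hv by (metis mult_pos_pos not_le)
    then have "B = 0" using B0 by simp
    then have Ap: "A > 0" using AB by simp
    have "lo*NHt \<le> lo*Xh" using l1 \<open>B = 0\<close> by simp
    also have "\<dots> \<le> lo*(hi*v1*A)" using h3 lo0 by simp
    finally have "hi*hi*v2*A \<le> lo*(hi*v1*A)" using neg' \<open>B = 0\<close> by simp
    then have "hi*((hi*v2)*A) \<le> hi*((lo*v1)*A)" by (simp add: algebra_simps)
    then have "(hi*v2)*A \<le> (lo*v1)*A" using lohi lo0 by simp
    then have lv2: "hi*v2 \<le> lo*v1" using Ap by simp
    have "(lo*v1 - hi*v2)*C \<ge> 0" using lv2 C0 by simp
    then have "Xh \<le> hi*v2*A" using h2 by (simp add: algebra_simps)
    then have "lo*Xh \<le> lo*(hi*v2*A)" using lo0 by simp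
    then have "lo*NHt \<le> lo*(hi*v2*A)" using l1 \<open>B = 0\<close> by simp
    moreover have "lo*(hi*v2*A) < hi*(hi*v2*A)" using lohi hv Ap by (intro mult_strict_right_mono) auto
    ultimately show False using neg' \<open>B = 0\<close> by (simp add: algebra_simps)
  qed
qed

lemma pow_k2: "(q::nat) \<ge> 2 \<Longrightarrow> x * x * (x::real)^(q-2) = x^q"
proof -
  assume q2: "q \<ge> 2"
  obtain k where kq: "q = Suc (Suc k)" using q2 by (metis Suc_diff_Suc diff_Suc_1 le_add_diff_inverse2 numeral_2_eq_2 add_2_eq_Suc')
  show ?thesis unfolding kq by simp
qed


lemma flow_balance:
  fixes N :: "nat \<Rightarrow> real" and P :: "nat \<Rightarrow> nat \<Rightarrow> real"
  assumes finX: "finite X" and TX: "T \<subseteq> X" and ST: "S \<subseteq> T" and i0S: "i0 \<notin> S"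
    and row: "\<And>y. y \<in> T \<Longrightarrow> (\<Sum>x\<in>X. P y x) = 1"
    and bal: "\<And>x. x \<in> X \<Longrightarrow> N x = (if x = i0 then 1 else 0) + (\<Sum>y\<in>T. N y * P y x)"
  shows "(\<Sum>y\<in>S. \<Sum>x\<in>X-S. N y * P y x) = (\<Sum>y\<in>T-S. \<Sum>x\<in>S. N y * P y x)"
proof -
  have fT: "finite T" using finX TX finite_subset by blast
  have SX: "S \<subseteq> X" using ST TX by blast
  have "(\<Sum>x\<in>S. N x) = (\<Sum>x\<in>S. \<Sum>y\<in>T. N y * P y x)"
  proof (rule sum.cong)
    fix x assume "x \<in> S"
    then show "N x = (\<Sum>y\<in>T. N y * P y x)" using bal[of x] SX i0S by auto
  qed simp
  also have "\<dots> = (\<Sum>y\<in>T. \<Sum>x\<in>S. N y * P y x)" by (rule sum.swap)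
  also have "\<dots> = (\<Sum>y\<in>T-S. \<Sum>x\<in>S. N y * P y x) + (\<Sum>y\<in>S. \<Sum>x\<in>S. N y * P y x)"
    using sum.subset_diff[OF ST fT] by simp
  finally have 1: "(\<Sum>x\<in>S. N x) = (\<Sum>y\<in>T-S. \<Sum>x\<in>S. N y * P y x) + (\<Sum>y\<in>S. \<Sum>x\<in>S. N y * P y x)" .
  have "(\<Sum>y\<in>S. N y) = (\<Sum>y\<in>S. \<Sum>x\<in>X. N y * P y x)"
  proof (rule sum.cong)
    fix y assume "y \<in> S"
    then have "(\<Sum>x\<in>X. P y x) = 1" using row ST by auto
    then show "N y = (\<Sum>x\<in>X. N y * P y x)" by (simp add: sum_distrib_left[symmetric])
  qed simp
  also have "\<dots> = (\<Sum>y\<in>S. (\<Sum>x\<in>X-S. N y * P y x) + (\<Sum>x\<in>S. N y * P y x))"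
    by (intro sum.cong refl) (rule sum.subset_diff[OF SX finX])
  also have "\<dots> = (\<Sum>y\<in>S. \<Sum>x\<in>X-S. N y * P y x) + (\<Sum>y\<in>S. \<Sum>x\<in>S. N y * P y x)"
    by (simp add: sum.distrib)
  finally show ?thesis using 1 by linarith
qed


locale odds_setup =
  fixes X T :: "nat set" and i0 :: nat
    and NH NL :: "nat \<Rightarrow> real" and PH PL :: "nat \<Rightarrow> nat \<Rightarrow> real" and lo hi :: real
  assumes finX: "finite X" and TX: "T \<subseteq> X" and i0T: "i0 \<in> T"
    and NH_nn: "\<And>x. x \<in> X \<Longrightarrow> NH x \<ge> 0" and NL_nn: "\<And>x. x \<in> X \<Longrightarrow> NL x \<ge> 0"
    and PH_nn: "\<And>y x. y \<in> T \<Longrightarrow> x \<in> X \<Longrightarrow> PH y x \<ge> 0"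
    and PL_nn: "\<And>y x. y \<in> T \<Longrightarrow> x \<in> X \<Longrightarrow> PL y x \<ge> 0"
    and PH_row: "\<And>y. y \<in> T \<Longrightarrow> (\<Sum>x\<in>X. PH y x) = 1"
    and PL_row: "\<And>y. y \<in> T \<Longrightarrow> (\<Sum>x\<in>X. PL y x) = 1"
    and lo_pos: "0 < lo" and lo_hi: "lo < hi"
    and edge_lo: "\<And>y x. y \<in> T \<Longrightarrow> x \<in> X \<Longrightarrow> lo * PL y x \<le> PH y x"
    and edge_hi: "\<And>y x. y \<in> T \<Longrightarrow> x \<in> X \<Longrightarrow> PH y x \<le> hi * PL y x"
    and balH: "\<And>x. x \<in> X \<Longrightarrow> NH x = (if x = i0 then 1 else 0) + (\<Sum>y\<in>T. NH y * PH y x)"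
    and balL: "\<And>x. x \<in> X \<Longrightarrow> NL x = (if x = i0 then 1 else 0) + (\<Sum>y\<in>T. NL y * PL y x)"
    and pos: "\<And>x. x \<in> X \<Longrightarrow> NH x > 0 \<longleftrightarrow> NL x > 0"
    and reachL: "\<And>S. S \<subseteq> T \<Longrightarrow> i0 \<notin> S \<Longrightarrow> (\<exists>z\<in>S. NL z > 0) \<Longrightarrow>
                    (\<Sum>y\<in>T-S. \<Sum>x\<in>S. NL y * PL y x) > 0"
    and reachH: "\<And>S. S \<subseteq> T \<Longrightarrow> i0 \<notin> S \<Longrightarrow> (\<exists>z\<in>S. NH z > 0) \<Longrightarrow>
                    (\<Sum>y\<in>T-S. \<Sum>x\<in>S. NH y * PH y x) > 0"
begin

lemma finT: "finite T" using finX TX finite_subset by blast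

lemma swap: "odds_setup X T i0 NL NH PL PH (1/hi) (1/lo)"
proof
  show "\<And>y x. y \<in> T \<Longrightarrow> x \<in> X \<Longrightarrow> 1 / hi * PH y x \<le> PL y x"
  proof -
    fix y x assume "y \<in> T" "x \<in> X"
    then have "PH y x \<le> hi * PL y x" by (rule edge_hi)
    then show "1 / hi * PH y x \<le> PL y x" using lo_pos lo_hi by (simp add: field_simps)
  qed
  show "\<And>y x. y \<in> T \<Longrightarrow> x \<in> X \<Longrightarrow> PL y x \<le> 1 / lo * PH y x"
  proof -
    fix y x assume "y \<in> T" "x \<in> X"
    then have "lo * PL y x \<le> PH y x" by (rule edge_lo)
    then show "PL y x \<le> 1 / lo * PH y x" using lo_pos by (simp add: field_simps)
  qed
  show "0 < 1 / hi" using lo_pos lo_hi by simp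
  show "1 / hi < 1 / lo" using lo_pos lo_hi by (simp add: field_simps)
qed (use finX TX i0T NH_nn NL_nn PH_nn PL_nn PH_row PL_row balH balL pos reachL reachH in auto)

definition r :: "nat \<Rightarrow> real" where "r y = NH y / NL y"
definition V :: "nat set" where "V = {y\<in>T. NL y > 0}"
definition Vals :: "real set" where "Vals = r ` V"

lemma finV: "finite V" using finT unfolding V_def by auto
lemma finVals: "finite Vals" using finV unfolding Vals_def by auto
lemma i0V: "i0 \<in> V"
proof -
  have "NL i0 = 1 + (\<Sum>y\<in>T. NL y * PL y i0)" using balL[of i0] i0T TX by auto
  moreover have "(\<Sum>y\<in>T. NL y * PL y i0) \<ge> 0"
    using NL_nn PL_nn TX i0T by (intro sum_nonneg mult_nonneg_nonneg) auto
  ultimately show ?thesis unfolding V_def using i0T by auto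
qed
lemma Vals_ne: "Vals \<noteq> {}" using i0V unfolding Vals_def by auto

lemma NH_eq: "y \<in> V \<Longrightarrow> NH y = r y * NL y" unfolding V_def r_def by auto
lemma r_pos: "y \<in> V \<Longrightarrow> r y > 0"
  unfolding V_def r_def using pos TX by auto
lemma Vals_pos: "v \<in> Vals \<Longrightarrow> v > 0" unfolding Vals_def using r_pos by auto

lemma NH_zero: "y \<in> T \<Longrightarrow> \<not> NL y > 0 \<Longrightarrow> NH y = 0"
  using pos[of y] NH_nn[of y] NL_nn[of y] TX by force

lemma upper_bound: "y \<in> T \<Longrightarrow> (\<And>y. y \<in> V \<Longrightarrow> r y \<le> c) \<Longrightarrow> c \<ge> 0 \<Longrightarrow> NH y \<le> c * NL y"
proof -
  assume y: "y \<in> T" and c: "\<And>y. y \<in> V \<Longrightarrow> r y \<le> c" and c0: "c \<ge> 0"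
  show "NH y \<le> c * NL y"
  proof (cases "NL y > 0")
    case True
    then have "y \<in> V" using y unfolding V_def by auto
    then show ?thesis using NH_eq c[of y] True by (simp add: mult_right_mono)
  next
    case False
    then show ?thesis using NH_zero y NL_nn[of y] TX c0 by auto
  qed
qed

lemma lower_bound: "y \<in> T \<Longrightarrow> (\<And>y. y \<in> V \<Longrightarrow> r y \<ge> c) \<Longrightarrow> c \<ge> 0 \<Longrightarrow> NH y \<ge> c * NL y"
proof -
  assume y: "y \<in> T" and c: "\<And>y. y \<in> V \<Longrightarrow> r y \<ge> c" and c0: "c \<ge> 0"
  show "NH y \<ge> c * NL y"
  proof (cases "NL y > 0")
    case True
    then have "y \<in> V" using y unfolding V_def by auto
    then show ?thesis using NH_eq c[of y] True by (simp add: mult_right_mono)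
  next
    case False
    then show ?thesis using NH_zero y NL_nn[of y] TX c0 by auto
  qed
qed

lemma cut:
  assumes ST: "S \<subseteq> T"
    and lowS: "\<And>y. y \<in> S \<Longrightarrow> NH y \<ge> c' * NL y"
    and upS: "\<And>y. y \<in> T - S \<Longrightarrow> NH y \<le> c * NL y"
    and c0: "c \<ge> 0" and c'0: "c' \<ge> 0"
    and reach: "(i0 \<notin> S \<and> (\<exists>z\<in>S. NL z > 0)) \<or> (i0 \<in> S \<and> (\<exists>z\<in>T-S. NL z > 0))"
  shows "lo * c' \<le> hi * c"
proof -
  have SX: "S \<subseteq> X" using ST TX by blast
  have low: "(lo * c') * (NL y * PL y x) \<le> NH y * PH y x" if "y \<in> S" "x \<in> X" for y x
  proof -
    have "(c' * NL y) * (lo * PL y x) \<le> NH y * PH y x"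
      using that lowS[of y] edge_lo[of y x] NH_nn[of y] PL_nn[of y x] lo_pos ST SX
      by (intro mult_mono) auto
    then show ?thesis by (simp add: algebra_simps)
  qed
  have up: "NH y * PH y x \<le> (hi * c) * (NL y * PL y x)" if "y \<in> T - S" "x \<in> X" for y x
  proof -
    have "NH y * PH y x \<le> (c * NL y) * (hi * PL y x)"
      using that upS[of y] edge_hi[of y x] NL_nn[of y] PH_nn[of y x] c0 TX
      by (intro mult_mono) auto
    then show ?thesis by (simp add: algebra_simps)
  qed
  from reach show ?thesis
  proof
    assume a: "i0 \<notin> S \<and> (\<exists>z\<in>S. NL z > 0)"
    have eqH: "(\<Sum>y\<in>S. \<Sum>x\<in>X-S. NH y * PH y x) = (\<Sum>y\<in>T-S. \<Sum>x\<in>S. NH y * PH y x)"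
      using flow_balance[OF finX TX ST _ PH_row balH] a by auto
    have eqL: "(\<Sum>y\<in>S. \<Sum>x\<in>X-S. NL y * PL y x) = (\<Sum>y\<in>T-S. \<Sum>x\<in>S. NL y * PL y x)"
      using flow_balance[OF finX TX ST _ PL_row balL] a by auto
    have inpos: "(\<Sum>y\<in>T-S. \<Sum>x\<in>S. NL y * PL y x) > 0" using reachL[OF ST] a by auto
    have "(lo * c') * (\<Sum>y\<in>S. \<Sum>x\<in>X-S. NL y * PL y x) \<le> (\<Sum>y\<in>S. \<Sum>x\<in>X-S. NH y * PH y x)"
      unfolding sum_distrib_left using low by (intro sum_mono) auto
    also have "\<dots> = (\<Sum>y\<in>T-S. \<Sum>x\<in>S. NH y * PH y x)" by (rule eqH)
    also have "\<dots> \<le> (hi * c) * (\<Sum>y\<in>T-S. \<Sum>x\<in>S. NL y * PL y x)"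
      unfolding sum_distrib_left using up SX by (intro sum_mono) auto
    finally have "(lo * c') * (\<Sum>y\<in>T-S. \<Sum>x\<in>S. NL y * PL y x) \<le> (hi * c) * (\<Sum>y\<in>T-S. \<Sum>x\<in>S. NL y * PL y x)"
      using eqL by simp
    then show ?thesis using inpos by simp
  next
    assume a: "i0 \<in> S \<and> (\<exists>z\<in>T-S. NL z > 0)"
    define U where "U = T - S"
    have UT: "U \<subseteq> T" unfolding U_def by blast
    have TU: "T - U = S" unfolding U_def using ST by blast
    have i0U: "i0 \<notin> U" unfolding U_def using a by blast
    have UX: "U \<subseteq> X" using UT TX by blast
    have eqH: "(\<Sum>y\<in>U. \<Sum>x\<in>X-U. NH y * PH y x) = (\<Sum>y\<in>T-U. \<Sum>x\<in>U. NH y * PH y x)"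
      using flow_balance[OF finX TX UT i0U PH_row balH] .
    have eqL: "(\<Sum>y\<in>U. \<Sum>x\<in>X-U. NL y * PL y x) = (\<Sum>y\<in>T-U. \<Sum>x\<in>U. NL y * PL y x)"
      using flow_balance[OF finX TX UT i0U PL_row balL] .
    have inpos: "(\<Sum>y\<in>T-U. \<Sum>x\<in>U. NL y * PL y x) > 0" using reachL[OF UT i0U] a U_def by auto
    have "(lo * c') * (\<Sum>y\<in>T-U. \<Sum>x\<in>U. NL y * PL y x) \<le> (\<Sum>y\<in>T-U. \<Sum>x\<in>U. NH y * PH y x)"
      unfolding sum_distrib_left using low UX TU by (intro sum_mono) auto
    also have "\<dots> = (\<Sum>y\<in>U. \<Sum>x\<in>X-U. NH y * PH y x)" by (rule eqH[symmetric])
    also have "\<dots> \<le> (hi * c) * (\<Sum>y\<in>U. \<Sum>x\<in>X-U. NL y * PL y x)"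
      unfolding sum_distrib_left using up U_def by (intro sum_mono) auto
    finally have "(lo * c') * (\<Sum>y\<in>T-U. \<Sum>x\<in>U. NL y * PL y x) \<le> (hi * c) * (\<Sum>y\<in>T-U. \<Sum>x\<in>U. NL y * PL y x)"
      using eqL by simp
    then show ?thesis using inpos by simp
  qed
qed

lemma chain_aux:
  "\<And>c. c \<in> Vals \<Longrightarrow> d \<in> Vals \<Longrightarrow> c \<le> d \<Longrightarrow> card {v\<in>Vals. c < v \<and> v \<le> d} = k \<Longrightarrow>
     d \<le> (hi/lo)^k * c"
proof (induction k)
  case 0
  have "finite {v\<in>Vals. c < v \<and> v \<le> d}" using finVals by auto
  then have "{v\<in>Vals. c < v \<and> v \<le> d} = {}" using 0 by simp
  then have "d = c" using 0 by force
  then show ?case by simp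
next
  case (Suc k)
  have fin: "finite {v\<in>Vals. c < v \<and> v \<le> d}" using finVals by auto
  have ne: "{v\<in>Vals. c < v \<and> v \<le> d} \<noteq> {}" using Suc.prems(4) by (metis card.empty nat.distinct(1))
  then have cd: "c < d" by auto
  define A where "A = {v\<in>Vals. c < v}"
  have finA: "finite A" using finVals unfolding A_def by auto
  have dA: "d \<in> A" using Suc.prems cd unfolding A_def by auto
  define c' where "c' = Min A"
  have c'A: "c' \<in> A" unfolding c'_def using finA dA Min_in by blast
  have c'le: "\<And>v. v \<in> A \<Longrightarrow> c' \<le> v" unfolding c'_def using finA by auto
  have c'V: "c' \<in> Vals" and cc': "c < c'" using c'A unfolding A_def by auto
  have c'd: "c' \<le> d" using c'le dA by auto
  have seteq: "{v\<in>Vals. c' < v \<and> v \<le> d} = {v\<in>Vals. c < v \<and> v \<le> d} - {c'}"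
    using c'le cc' unfolding A_def by force
  have "card {v\<in>Vals. c' < v \<and> v \<le> d} = k"
    using seteq Suc.prems(4) c'V cc' c'd fin by (simp add: card_Diff_singleton)
  then have IH: "d \<le> (hi/lo)^k * c'" using Suc.IH[OF c'V Suc.prems(2) c'd] by simp
  define S where "S = {y\<in>V. r y > c}"
  have ST: "S \<subseteq> T" unfolding S_def V_def by auto
  have lowS: "NH y \<ge> c' * NL y" if "y \<in> S" for y
  proof -
    have "y \<in> V" "r y > c" using that unfolding S_def by auto
    then have "r y \<in> A" unfolding A_def Vals_def by auto
    then have "c' \<le> r y" by (rule c'le)
    moreover have "NL y \<ge> 0" using \<open>y \<in> V\<close> unfolding V_def by auto
    ultimately show ?thesis using NH_eq[OF \<open>y \<in> V\<close>] by (simp add: mult_right_mono)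
  qed
  have c0: "c \<ge> 0" using Vals_pos Suc.prems(1) by force
  have c'0: "c' \<ge> 0" using c0 cc' by simp
  have upS: "NH y \<le> c * NL y" if "y \<in> T - S" for y
  proof (cases "NL y > 0")
    case True
    then have "y \<in> V" "\<not> r y > c" using that unfolding V_def S_def by auto
    then show ?thesis using NH_eq[of y] True by (simp add: mult_right_mono)
  next
    case False
    then show ?thesis using NH_zero[of y] that NL_nn[of y] TX c0 by auto
  qed
  have reach: "(i0 \<notin> S \<and> (\<exists>z\<in>S. NL z > 0)) \<or> (i0 \<in> S \<and> (\<exists>z\<in>T-S. NL z > 0))"
  proof (cases "i0 \<in> S")
    case True
    obtain z where "z \<in> V" "r z = c" using Suc.prems(1) unfolding Vals_def by auto
    then have "z \<in> T - S" "NL z > 0" unfolding S_def V_def by auto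
    then show ?thesis using True by auto
  next
    case False
    obtain z where "z \<in> V" "r z = c'" using c'V unfolding Vals_def by auto
    then have "z \<in> S" "NL z > 0" using cc' unfolding S_def V_def by auto
    then show ?thesis using False by auto
  qed
  have "lo * c' \<le> hi * c" by (rule cut[OF ST lowS upS c0 c'0 reach])
  then have "c' \<le> (hi/lo) * c" using lo_pos by (simp add: field_simps)
  then have "(hi/lo)^k * c' \<le> (hi/lo)^k * ((hi/lo) * c)"
    using lo_pos lo_hi by (intro mult_left_mono) auto
  then show ?case using IH by (simp add: algebra_simps)
qed

lemma chain:
  "c \<in> Vals \<Longrightarrow> d \<in> Vals \<Longrightarrow> c \<le> d \<Longrightarrow> d \<le> (hi/lo)^(card {v\<in>Vals. c < v \<and> v \<le> d}) * c"
  using chain_aux by blast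


lemma top:
  assumes ST: "S \<subseteq> T" and i0S: "i0 \<notin> S" and tX: "t \<in> X" and tT: "t \<notin> T"
    and eqS: "\<And>y. y \<in> S \<Longrightarrow> NH y = v1 * NL y"
    and upS: "\<And>y. y \<in> T - S \<Longrightarrow> NH y \<le> v2 * NL y"
    and v10: "v1 \<ge> 0" and v20: "v2 > 0" and NLt: "NL t > 0"
  shows "lo * NH t < hi*hi*v2*NL t"
proof -
  have SX: "S \<subseteq> X" using ST TX by blast
  have fS: "finite S" using finT ST finite_subset by blast
  have ti0: "t \<noteq> i0" using tT i0T by blast
  define A where "A = (\<Sum>y\<in>S. NL y * PL y t)"
  define B where "B = (\<Sum>y\<in>T-S. NL y * PL y t)"
  define Xh where "Xh = (\<Sum>y\<in>S. NH y * PH y t)"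
  define C where "C = (\<Sum>y\<in>S. \<Sum>x\<in>X-S-{t}. NL y * PL y x)"
  define RH where "RH = (\<Sum>y\<in>S. \<Sum>x\<in>X-S-{t}. NH y * PH y x)"
  have A0: "A \<ge> 0" unfolding A_def using NL_nn PL_nn ST SX tX by (intro sum_nonneg mult_nonneg_nonneg) auto
  have B0: "B \<ge> 0" unfolding B_def using NL_nn PL_nn TX tX by (intro sum_nonneg mult_nonneg_nonneg) auto
  have C0: "C \<ge> 0" unfolding C_def using NL_nn PL_nn ST SX by (intro sum_nonneg mult_nonneg_nonneg) auto
  have NLt_eq: "NL t = A + B"
    using balL[OF tX] ti0 sum.subset_diff[OF ST finT, of "\<lambda>y. NL y * PL y t"] unfolding A_def B_def by simp
  have NHt_eq: "NH t = Xh + (\<Sum>y\<in>T-S. NH y * PH y t)"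
    using balH[OF tX] ti0 sum.subset_diff[OF ST finT, of "\<lambda>y. NH y * PH y t"] unfolding Xh_def by simp
  have h1': "(\<Sum>y\<in>T-S. NH y * PH y t) \<le> hi*v2*B"
    unfolding B_def sum_distrib_left
  proof (rule sum_mono)
    fix y assume y: "y \<in> T - S"
    have "NH y * PH y t \<le> (v2 * NL y) * (hi * PL y t)"
      using upS[OF y] edge_hi[of y t] y tX NL_nn[of y] PH_nn[of y t] TX v20
      by (intro mult_mono) auto
    then show "NH y * PH y t \<le> hi * v2 * (NL y * PL y t)" by (simp add: algebra_simps)
  qed
  have h1: "NH t \<le> Xh + hi*v2*B" using NHt_eq h1' by simp
  have tXS: "t \<in> X - S" using tX tT ST by blast
  have outH: "(\<Sum>y\<in>S. \<Sum>x\<in>X-S. NH y * PH y x) = Xh + RH"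
    unfolding Xh_def RH_def sum.distrib[symmetric]
    by (intro sum.cong refl) (use sum.remove[OF _ tXS, of "\<lambda>x. NH _ * PH _ x"] finX in auto)
  have outL: "(\<Sum>y\<in>S. \<Sum>x\<in>X-S. NL y * PL y x) = A + C"
    unfolding A_def C_def sum.distrib[symmetric]
    by (intro sum.cong refl) (use sum.remove[OF _ tXS, of "\<lambda>x. NL _ * PL _ x"] finX in auto)
  have eqH: "(\<Sum>y\<in>S. \<Sum>x\<in>X-S. NH y * PH y x) = (\<Sum>y\<in>T-S. \<Sum>x\<in>S. NH y * PH y x)"
    using flow_balance[OF finX TX ST i0S PH_row balH] .
  have eqL: "(\<Sum>y\<in>S. \<Sum>x\<in>X-S. NL y * PL y x) = (\<Sum>y\<in>T-S. \<Sum>x\<in>S. NL y * PL y x)"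
    using flow_balance[OF finX TX ST i0S PL_row balL] .
  have RHge: "lo*v1*C \<le> RH"
    unfolding C_def RH_def sum_distrib_left
  proof (intro sum_mono)
    fix y x assume y: "y \<in> S" and x: "x \<in> X - S - {t}"
    have "v1 * NL y * (lo * PL y x) \<le> v1 * NL y * PH y x"
      using edge_lo[of y x] y x ST v10 NL_nn[of y] SX by (intro mult_left_mono) auto
    then show "lo * v1 * (NL y * PL y x) \<le> NH y * PH y x" using eqS[OF y] by (simp add: algebra_simps)
  qed
  have inH: "(\<Sum>y\<in>T-S. \<Sum>x\<in>S. NH y * PH y x) \<le> hi*v2*(\<Sum>y\<in>T-S. \<Sum>x\<in>S. NL y * PL y x)"
    unfolding sum_distrib_left
  proof (intro sum_mono)
    fix y x assume y: "y \<in> T - S" and x: "x \<in> S"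
    have "NH y * PH y x \<le> (v2 * NL y) * (hi * PL y x)"
      using upS[OF y] edge_hi[of y x] y x SX NL_nn[of y] PH_nn[of y x] TX v20
      by (intro mult_mono) auto
    then show "NH y * PH y x \<le> hi * v2 * (NL y * PL y x)" by (simp add: algebra_simps)
  qed
  have inL: "(\<Sum>y\<in>T-S. \<Sum>x\<in>S. NL y * PL y x) = A + C" using eqL outL by simp
  have h2: "Xh + lo*v1*C \<le> hi*v2*(A+C)"
    using RHge outH eqH inH unfolding inL by linarith
  have h3: "Xh \<le> hi*v1*A"
    unfolding Xh_def A_def sum_distrib_left
  proof (rule sum_mono)
    fix y assume y: "y \<in> S"
    have "v1 * NL y * PH y t \<le> v1 * NL y * (hi * PL y t)"
      using edge_hi[of y t] y tX ST v10 NL_nn[of y] SX by (intro mult_left_mono) auto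
    then show "NH y * PH y t \<le> hi * v1 * (NL y * PL y t)" using eqS[OF y] by (simp add: algebra_simps)
  qed
  have h4: "lo*v1*A \<le> Xh"
    unfolding Xh_def A_def sum_distrib_left
  proof (rule sum_mono)
    fix y assume y: "y \<in> S"
    have "v1 * NL y * (lo * PL y t) \<le> v1 * NL y * PH y t"
      using edge_lo[of y t] y tX ST v10 NL_nn[of y] SX by (intro mult_left_mono) auto
    then show "lo * v1 * (NL y * PL y t) \<le> NH y * PH y t" using eqS[OF y] by (simp add: algebra_simps)
  qed
  have "lo * NH t < hi*hi*v2*(A+B)"
    by (rule top_alg[OF A0 B0 C0 _ lo_pos lo_hi v10 v20 h1 h2 h3 h4]) (use NLt NLt_eq in simp)
  then show ?thesis using NLt_eq by simp
qed

lemma end_upper: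
  assumes tX: "t \<in> X" and tT: "t \<notin> T" and M: "\<And>y. y \<in> T \<Longrightarrow> NH y \<le> M * NL y" and M0: "M \<ge> 0"
  shows "NH t \<le> hi * M * NL t"
proof -
  have ti0: "t \<noteq> i0" using tT i0T by blast
  have "NH t = (\<Sum>y\<in>T. NH y * PH y t)" using balH[OF tX] ti0 by simp
  also have "\<dots> \<le> (\<Sum>y\<in>T. hi * M * (NL y * PL y t))"
  proof (rule sum_mono)
    fix y assume y: "y \<in> T"
    have "NH y * PH y t \<le> (M * NL y) * (hi * PL y t)"
      using M[OF y] edge_hi[of y t] y tX NL_nn[of y] PH_nn[of y t] TX M0
      by (intro mult_mono) auto
    then show "NH y * PH y t \<le> hi * M * (NL y * PL y t)" by (simp add: algebra_simps)
  qed
  also have "\<dots> = hi * M * NL t" using balL[OF tX] ti0 by (simp add: sum_distrib_left)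
  finally show ?thesis .
qed

lemma end_lower:
  assumes tX: "t \<in> X" and tT: "t \<notin> T" and M: "\<And>y. y \<in> T \<Longrightarrow> NH y \<ge> M * NL y" and M0: "M \<ge> 0"
  shows "NH t \<ge> lo * M * NL t"
proof -
  have ti0: "t \<noteq> i0" using tT i0T by blast
  have "lo * M * NL t = (\<Sum>y\<in>T. lo * M * (NL y * PL y t))" using balL[OF tX] ti0 by (simp add: sum_distrib_left)
  also have "\<dots> \<le> (\<Sum>y\<in>T. NH y * PH y t)"
  proof (rule sum_mono)
    fix y assume y: "y \<in> T"
    have "(M * NL y) * (lo * PL y t) \<le> NH y * PH y t"
      using M[OF y] edge_lo[of y t] y tX NH_nn[of y] PL_nn[of y t] TX M0 lo_pos
      by (intro mult_mono) auto
    then show "lo * M * (NL y * PL y t) \<le> NH y * PH y t" by (simp add: algebra_simps)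
  qed
  also have "\<dots> = NH t" using balH[OF tX] ti0 by simp
  finally show ?thesis .
qed


lemma card_Vals: "card Vals \<le> card T"
proof -
  have "card Vals \<le> card V" unfolding Vals_def by (rule card_image_le[OF finV])
  also have "\<dots> \<le> card T" using finT unfolding V_def by (intro card_mono) auto
  finally show ?thesis .
qed

lemma odds:
  assumes hX: "h \<in> X" and hT: "h \<notin> T" and lX: "l \<in> X" and lT: "l \<notin> T"
  shows "NH h * NL l \<le> (hi/lo)^(card T) * (NL h * NH l)"
    and "card T \<ge> 2 \<Longrightarrow> NL h > 0 \<Longrightarrow> NL l > 0 \<Longrightarrow> NH h * NL l < (hi/lo)^(card T) * (NL h * NH l)"
proof -
  define g where "g = hi/lo"
  have g1: "g > 1" unfolding g_def using lo_pos lo_hi by simp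
  define M where "M = Max Vals"
  define \<mu> where "\<mu> = Min Vals"
  define q where "q = card Vals"
  have MV: "M \<in> Vals" unfolding M_def using finVals Vals_ne by simp
  have \<mu>V: "\<mu> \<in> Vals" unfolding \<mu>_def using finVals Vals_ne by simp
  have leM: "\<And>v. v \<in> Vals \<Longrightarrow> v \<le> M" unfolding M_def using finVals by simp
  have ge\<mu>: "\<And>v. v \<in> Vals \<Longrightarrow> \<mu> \<le> v" unfolding \<mu>_def using finVals by simp
  have \<mu>0: "\<mu> > 0" using Vals_pos \<mu>V by simp
  have M0: "M \<ge> 0" using \<mu>0 ge\<mu>[OF MV] by simp
  have q1: "q \<ge> 1" unfolding q_def using finVals Vals_ne by (simp add: Suc_le_eq card_gt_0_iff)
  have qT: "q \<le> card T" unfolding q_def by (rule card_Vals)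
  have upM: "\<And>y. y \<in> T \<Longrightarrow> NH y \<le> M * NL y"
    by (rule upper_bound) (auto simp: Vals_def intro: leM M0)
  have low\<mu>: "\<And>y. y \<in> T \<Longrightarrow> NH y \<ge> \<mu> * NL y"
  proof (rule lower_bound)
    fix y assume "y \<in> V" then show "\<mu> \<le> r y" using ge\<mu> unfolding Vals_def by auto
  qed (use \<mu>0 in auto)
  have "{v\<in>Vals. \<mu> < v \<and> v \<le> M} = Vals - {\<mu>}" using leM ge\<mu> by force
  then have cardA: "card {v\<in>Vals. \<mu> < v \<and> v \<le> M} = q - 1" using \<mu>V finVals unfolding q_def by simp
  have chainM: "M \<le> g^(q-1) * \<mu>"
    using chain[OF \<mu>V MV ge\<mu>[OF MV]] cardA unfolding g_def by simp
  have Eh: "NH h \<le> hi * M * NL h" by (rule end_upper[OF hX hT upM M0])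
  have El: "NH l \<ge> lo * \<mu> * NL l" using end_lower[OF lX lT low\<mu>] \<mu>0 by simp
  have NHh0: "NH h \<ge> 0" using NH_nn hX by simp
  have NHl0: "NH l \<ge> 0" using NH_nn lX by simp
  have NLh0: "NL h \<ge> 0" using NL_nn hX by simp
  have NLl0: "NL l \<ge> 0" using NL_nn lX by simp
  have gq: "g^q \<le> g^(card T)" using g1 qT by (intro power_increasing) auto
  have main_ns: "NH h * NL l \<le> g^q * (NL h * NH l)" if pos2: "NL h > 0" "NL l > 0"
  proof -
    have "NH h * (lo * \<mu> * NL l) \<le> NH h * NH l" using El NHh0 by (rule mult_left_mono)
    also have "\<dots> \<le> (hi * M * NL h) * NH l" using Eh NHl0 by (rule mult_right_mono)
    also have "\<dots> \<le> (hi * (g^(q-1) * \<mu>) * NL h) * NH l"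
      using chainM lo_pos lo_hi NLh0 NHl0 by (intro mult_right_mono mult_left_mono) auto
    finally have "\<mu> * (lo * (NH h * NL l)) \<le> \<mu> * (hi * g^(q-1) * (NL h * NH l))"
      by (simp add: algebra_simps)
    then have "lo * (NH h * NL l) \<le> hi * g^(q-1) * (NL h * NH l)" using \<mu>0 by simp
    then have "NH h * NL l \<le> (hi/lo) * g^(q-1) * (NL h * NH l)" using lo_pos by (simp add: field_simps)
    also have "(hi/lo) * g^(q-1) = g^q" using q1 unfolding g_def by (metis One_nat_def Suc_diff_le diff_Suc_1 power_Suc)
    finally show ?thesis .
  qed
  show "NH h * NL l \<le> (hi/lo)^(card T) * (NL h * NH l)"
  proof (cases "NL h > 0 \<and> NL l > 0")
    case True
    then have "NH h * NL l \<le> g^q * (NL h * NH l)" using main_ns by auto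
    also have "\<dots> \<le> g^(card T) * (NL h * NH l)" using gq NLh0 NHl0 by (intro mult_right_mono) auto
    finally show ?thesis unfolding g_def .
  next
    case False
    then have "NH h * NL l = 0" using pos[OF hX] NHh0 NLh0 NLl0 by force
    moreover have "(hi/lo)^(card T) * (NL h * NH l) \<ge> 0" using lo_pos lo_hi NLh0 NHl0 by simp
    ultimately show ?thesis by linarith
  qed
  assume cT: "card T \<ge> 2" and NLhp: "NL h > 0" and NLlp: "NL l > 0"
  have NHlp: "NH l > 0" using pos[OF lX] NLlp by simp
  have Kp: "NL h * NH l > 0" using NLhp NHlp by simp
  show "NH h * NL l < (hi/lo)^(card T) * (NL h * NH l)"
  proof (cases "q = 1")
    case True
    have "NH h * NL l \<le> g^q * (NL h * NH l)" using main_ns NLhp NLlp by auto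
    also have "\<dots> < g^(card T) * (NL h * NH l)"
      using True cT g1 Kp by (intro mult_strict_right_mono power_strict_increasing) auto
    finally show ?thesis unfolding g_def .
  next
    case False
    then have q2: "q \<ge> 2" using q1 by simp
    have gq2: "(hi/lo) * (hi/lo) * g^(q-2) = g^q" unfolding g_def by (rule pow_k2[OF q2])
    have \<mu>M: "\<mu> \<noteq> M"
    proof
      assume "\<mu> = M"
      then have "Vals \<subseteq> {\<mu>}" using leM ge\<mu> by force
      then have "q \<le> 1" unfolding q_def using card_mono[of "{\<mu>}" Vals] by simp
      then show False using q2 by simp
    qed
    have \<mu>ltM: "\<mu> < M" using \<mu>M ge\<mu>[OF MV] by simp
    have card2: "card (Vals - {\<mu>, M}) = q - 2"
      using \<mu>V MV \<mu>M finVals unfolding q_def by (simp add: card_Diff_subset)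
    obtain i0r where i0r: "r i0 \<in> Vals" using i0V unfolding Vals_def by auto
    have strict_q: "NH h * NL l < g^q * (NL h * NH l)"
    proof (cases "r i0 = M")
      case False
      define v2 where "v2 = Max (Vals - {M})"
      have ne: "Vals - {M} \<noteq> {}" using \<mu>V \<mu>M by auto
      have v2V: "v2 \<in> Vals - {M}" unfolding v2_def using Max_in[of "Vals - {M}"] ne finVals by blast
      have lev2: "\<And>v. v \<in> Vals - {M} \<Longrightarrow> v \<le> v2" unfolding v2_def using finVals by simp
      have v2p: "v2 > 0" using v2V Vals_pos by simp
      have v2M: "v2 < M" using v2V leM by force
      define S where "S = {y\<in>V. r y = M}"
      have ST: "S \<subseteq> T" unfolding S_def V_def by auto
      have i0S: "i0 \<notin> S" unfolding S_def using False by simp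
      have eqS: "NH y = M * NL y" if "y \<in> S" for y using that NH_eq unfolding S_def by auto
      have upS: "NH y \<le> v2 * NL y" if y: "y \<in> T - S" for y
      proof (cases "NL y > 0")
        case True
        then have "y \<in> V" using y unfolding V_def by auto
        then have "r y \<in> Vals - {M}" using y unfolding S_def Vals_def by auto
        then have "r y \<le> v2" by (rule lev2)
        then show ?thesis using NH_eq[OF \<open>y \<in> V\<close>] True by (simp add: mult_right_mono)
      next
        case False
        then show ?thesis using NH_zero[of y] y NL_nn[of y] TX by auto
      qed
      have topH: "lo * NH h < hi*hi*v2*NL h" by (rule top[OF ST i0S hX hT eqS upS M0 v2p NLhp])
      have "{v\<in>Vals. \<mu> < v \<and> v \<le> v2} = Vals - {\<mu>, M}"
        using lev2 ge\<mu> v2M by force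
      then have "card {v\<in>Vals. \<mu> < v \<and> v \<le> v2} = q - 2" using card2 by simp
      then have chain2: "v2 \<le> g^(q-2) * \<mu>"
        using chain[OF \<mu>V _ ge\<mu>[of v2]] v2V unfolding g_def by simp
      have "lo * (NH h * (lo * \<mu> * NL l)) \<le> lo * (NH h * NH l)"
        using El NHh0 lo_pos by (intro mult_left_mono) auto
      also have "\<dots> = (lo * NH h) * NH l" by simp
      also have "\<dots> < (hi*hi*v2*NL h) * NH l" using topH NHlp by (rule mult_strict_right_mono)
      also have "\<dots> \<le> (hi*hi*(g^(q-2) * \<mu>)*NL h) * NH l"
        using chain2 lo_pos lo_hi NLh0 NHl0 by (intro mult_right_mono mult_left_mono) auto
      finally have "\<mu> * (lo * lo * (NH h * NL l)) < \<mu> * (hi * hi * g^(q-2) * (NL h * NH l))"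
        by (simp add: algebra_simps)
      then have "lo * lo * (NH h * NL l) < hi * hi * g^(q-2) * (NL h * NH l)" using \<mu>0 by simp
      then have "NH h * NL l < (hi/lo) * (hi/lo) * g^(q-2) * (NL h * NH l)"
        using lo_pos by (simp add: field_simps)
      also have "(hi/lo) * (hi/lo) * g^(q-2) = g^q" by (rule gq2)
      finally show ?thesis .
    next
      case True
      define w where "w = Min (Vals - {\<mu>})"
      have ne: "Vals - {\<mu>} \<noteq> {}" using MV \<mu>M by auto
      have wV: "w \<in> Vals - {\<mu>}" unfolding w_def using Min_in[of "Vals - {\<mu>}"] ne finVals by blast
      have gew: "\<And>v. v \<in> Vals - {\<mu>} \<Longrightarrow> w \<le> v" unfolding w_def using finVals by simp
      have wp: "w > 0" using wV Vals_pos by simp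
      have \<mu>w: "\<mu> < w" using wV ge\<mu> by force
      define S where "S = {y\<in>V. r y = \<mu>}"
      have ST: "S \<subseteq> T" unfolding S_def V_def by auto
      have i0S: "i0 \<notin> S" unfolding S_def using True \<mu>M by auto
      have eqS: "NL y = (1/\<mu>) * NH y" if "y \<in> S" for y
        using that NH_eq \<mu>0 unfolding S_def by auto
      have upS: "NL y \<le> (1/w) * NH y" if y: "y \<in> T - S" for y
      proof (cases "NL y > 0")
        case True
        then have "y \<in> V" using y unfolding V_def by auto
        then have "r y \<in> Vals - {\<mu>}" using y unfolding S_def Vals_def by auto
        then have "w \<le> r y" by (rule gew)
        then have "w * NL y \<le> NH y" using NH_eq[OF \<open>y \<in> V\<close>] True by (simp add: mult_right_mono)
        then show ?thesis using wp by (simp add: field_simps)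
      next
        case False
        then show ?thesis using NH_zero[of y] y NL_nn[of y] TX by auto
      qed
      have topL: "1/hi * NL l < 1/lo * (1/lo) * (1/w) * NH l"
        by (rule odds_setup.top[OF swap ST i0S lX lT eqS upS]) (use \<mu>0 wp NHlp in auto)
      then have topL': "lo * lo * w * NL l < hi * NH l"
        using lo_pos lo_hi wp by (simp add: field_simps)
      have "{v\<in>Vals. w < v \<and> v \<le> M} = Vals - {\<mu>, w}"
        using gew leM \<mu>w by force
      moreover have "card (Vals - {\<mu>, w}) = q - 2"
        using \<mu>V wV finVals unfolding q_def by (simp add: card_Diff_subset)
      ultimately have "card {v\<in>Vals. w < v \<and> v \<le> M} = q - 2" by simp
      then have chain2: "M \<le> g^(q-2) * w"
        using chain[of w M] wV MV leM unfolding g_def by auto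
      have "lo * lo * w * (NH h * NL l) < hi * hi * g^(q-2) * w * (NL h * NH l)"
      proof (cases "NH h = 0")
        case True
        then show ?thesis using Kp wp g1 lo_pos lo_hi by simp
      next
        case False
        then have NHhp: "NH h > 0" using NHh0 by simp
        have "lo * lo * w * (NH h * NL l) = NH h * (lo * lo * w * NL l)" by simp
        also have "\<dots> < NH h * (hi * NH l)" using topL' NHhp by simp
        also have "\<dots> = hi * (NH h * NH l)" by simp
        also have "\<dots> \<le> hi * ((hi * M * NL h) * NH l)"
          using Eh NHl0 lo_pos lo_hi by (intro mult_left_mono mult_right_mono) auto
        also have "\<dots> \<le> hi * ((hi * (g^(q-2) * w) * NL h) * NH l)"
          using chain2 NHl0 NLh0 lo_pos lo_hi by (intro mult_left_mono mult_right_mono) auto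
        finally show ?thesis by (simp add: algebra_simps)
      qed
      then have "w * (lo * lo * (NH h * NL l)) < w * (hi * hi * g^(q-2) * (NL h * NH l))"
        by (simp add: algebra_simps)
      then have "lo * lo * (NH h * NL l) < hi * hi * g^(q-2) * (NL h * NH l)" using wp by simp
      then have "NH h * NL l < (hi/lo) * (hi/lo) * g^(q-2) * (NL h * NH l)"
        using lo_pos by (simp add: field_simps)
      also have "(hi/lo) * (hi/lo) * g^(q-2) = g^q" by (rule gq2)
      finally show ?thesis .
    qed
    also have "\<dots> \<le> g^(card T) * (NL h * NH l)" using gq Kp by (intro mult_right_mono) auto
    finally show ?thesis unfolding g_def .
  qed
qed


end


definition edges0 :: "nat \<Rightarrow> (nat \<Rightarrow> 's \<Rightarrow> nat \<Rightarrow> real) \<Rightarrow> (nat \<times> nat) set" where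
  "edges0 m f = {(i, k). i < m \<and> k < m \<and> (\<exists>s. f i s k > 0)}"

definition dlt :: "nat \<Rightarrow> nat \<Rightarrow> real" where "dlt i = (\<lambda>j. if j = i then 1 else 0)"

locale proto =
  fixes m :: nat and f :: "nat \<Rightarrow> 's::finite \<Rightarrow> nat \<Rightarrow> real" and h l :: nat
  assumes hm: "h < m" and lm: "l < m" and hl: "h \<noteq> l"
    and absh: "absorbing f h" and absl: "absorbing f l"
    and nonabs: "\<And>j. j < m \<Longrightarrow> j \<noteq> h \<Longrightarrow> j \<noteq> l \<Longrightarrow> \<not> absorbing f j"
    and f_nn: "\<And>i s k. i < m \<Longrightarrow> k < m \<Longrightarrow> f i s k \<ge> 0"
    and f_row: "\<And>i s. i < m \<Longrightarrow> (\<Sum>k<m. f i s k) = 1"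
    and trans: "\<And>j. j < m \<Longrightarrow> j \<noteq> h \<Longrightarrow> j \<noteq> l \<Longrightarrow>
                  \<exists>k. (j, k) \<in> (edges0 m f)\<^sup>* \<and> (k, j) \<notin> (edges0 m f)\<^sup>*"
begin

definition Tr :: "nat set" where "Tr = {j. j < m \<and> j \<noteq> h \<and> j \<noteq> l}"

lemma abs_iff: "j < m \<Longrightarrow> absorbing f j \<longleftrightarrow> j = h \<or> j = l"
  using nonabs absh absl by auto

lemma Tr_iff: "j \<in> Tr \<longleftrightarrow> j < m \<and> \<not> absorbing f j"
  unfolding Tr_def using abs_iff by auto

lemma finTr: "finite Tr" unfolding Tr_def by auto
lemma Tr_sub: "Tr \<subseteq> {..<m}" unfolding Tr_def by auto
lemma card_Tr: "card Tr = m - 2"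
proof -
  have "Tr = {..<m} - {h, l}" unfolding Tr_def by auto
  then show ?thesis using hm lm hl by (simp add: card_Diff_subset)
qed

lemma sum_Tr: "(\<Sum>j<m. (if absorbing f j then 0 else F j)) = (\<Sum>j\<in>Tr. F j)"
proof -
  have "(\<Sum>j<m. (if absorbing f j then 0 else F j)) = (\<Sum>j\<in>{..<m} \<inter> {j. \<not> absorbing f j}. F j)"
    by (simp add: sum.If_cases Compl_eq)
  also have "{..<m} \<inter> {j. \<not> absorbing f j} = Tr" using Tr_iff by auto
  finally show ?thesis .
qed

lemma sum_split3: "(\<Sum>j<m. F j) = (\<Sum>j\<in>Tr. F j) + F h + F l"
proof -
  have e: "{..<m} = Tr \<union> {h, l}" unfolding Tr_def using hm lm by auto
  have "(\<Sum>j<m. F j) = (\<Sum>j\<in>Tr. F j) + (\<Sum>j\<in>{h,l}. F j)"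
    unfolding e by (rule sum.union_disjoint) (auto simp: Tr_def finTr)
  then show ?thesis using hl by (simp add: add.assoc)
qed

end

locale proto_pi = proto m f h l for m :: nat and f :: "nat \<Rightarrow> 's::finite \<Rightarrow> nat \<Rightarrow> real" and h l +
  fixes \<pi> :: "'s \<Rightarrow> real"
  assumes vp: "valid_signal_dist \<pi>"
begin

lemma pi_pos: "\<pi> s > 0" using vp unfolding valid_signal_dist_def by auto
lemma pi_sum: "(\<Sum>s\<in>UNIV. \<pi> s) = 1" using vp unfolding valid_signal_dist_def by auto

lemma P_nn: "i < m \<Longrightarrow> k < m \<Longrightarrow> chain_P \<pi> f i k \<ge> 0"
  unfolding chain_P_def using pi_pos f_nn by (intro sum_nonneg mult_nonneg_nonneg) (auto intro: less_imp_le)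

lemma P_row: "i < m \<Longrightarrow> (\<Sum>k<m. chain_P \<pi> f i k) = 1"
proof -
  assume i: "i < m"
  have "(\<Sum>k<m. chain_P \<pi> f i k) = (\<Sum>s\<in>UNIV. \<pi> s * (\<Sum>k<m. f i s k))"
    unfolding chain_P_def sum_distrib_left by (rule sum.swap)
  also have "\<dots> = 1" using f_row[OF i] pi_sum by simp
  finally show ?thesis .
qed

lemma P_le1: "i < m \<Longrightarrow> k < m \<Longrightarrow> chain_P \<pi> f i k \<le> 1"
proof -
  assume i: "i < m" and k: "k < m"
  have "chain_P \<pi> f i k \<le> (\<Sum>k<m. chain_P \<pi> f i k)"
    using k P_nn[OF i] by (intro member_le_sum) auto
  then show ?thesis using P_row[OF i] by simp
qed

lemma P_pos_iff: "i < m \<Longrightarrow> k < m \<Longrightarrow> chain_P \<pi> f i k > 0 \<longleftrightarrow> (\<exists>s. f i s k > 0)"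
proof -
  assume i: "i < m" and k: "k < m"
  have nn: "\<And>s. \<pi> s * f i s k \<ge> 0" using pi_pos f_nn[OF i k] by (simp add: less_imp_le)
  have "chain_P \<pi> f i k \<noteq> 0 \<longleftrightarrow> (\<exists>s. \<pi> s * f i s k \<noteq> 0)"
    unfolding chain_P_def using sum_nonneg_eq_0_iff[of UNIV "\<lambda>s. \<pi> s * f i s k"] nn by auto
  moreover have "(\<pi> s * f i s k \<noteq> 0) \<longleftrightarrow> f i s k > 0" for s using pi_pos[of s] f_nn[OF i k, of s] by auto
  moreover have "chain_P \<pi> f i k \<ge> 0" using P_nn[OF i k] .
  ultimately show ?thesis by auto
qed

lemma edges_eq: "chain_edges m \<pi> f = edges0 m f"
  unfolding chain_edges_def edges0_def using P_pos_iff by auto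

lemma cont_out: "k \<ge> m \<Longrightarrow> cont m \<pi> f g sg t k = 0"
  by (cases t) auto

lemma cont_Suc': "k < m \<Longrightarrow> cont m \<pi> f g sg (Suc t) k =
   (\<Sum>j<m. (if absorbing f j then 0 else (1 - sg j) * cont m \<pi> f g sg t j * chain_P \<pi> f j k))"
  unfolding chain_P_def by simp

lemma cont_nn:
  assumes g: "\<And>j. j < m \<Longrightarrow> g j \<ge> 0" and sg: "\<And>j. j < m \<Longrightarrow> 0 \<le> sg j \<and> sg j \<le> 1"
  shows "cont m \<pi> f g sg t k \<ge> 0"
proof (induction t arbitrary: k)
  case 0 then show ?case using g by simp
next
  case (Suc t)
  show ?case
  proof (cases "k < m")
    case True
    show ?thesis unfolding cont_Suc'[OF True]
      using Suc.IH sg P_nn True by (intro sum_nonneg) (auto intro!: mult_nonneg_nonneg)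
  qed simp
qed

lemma cont_le0:
  assumes g: "\<And>j. j < m \<Longrightarrow> g j \<ge> 0" and sg: "\<And>j. j < m \<Longrightarrow> 0 \<le> sg j \<and> sg j \<le> 1"
  shows "cont m \<pi> f g sg t k \<le> cont m \<pi> f g (\<lambda>_. 0) t k"
proof (induction t arbitrary: k)
  case 0 then show ?case by simp
next
  case (Suc t)
  show ?case
  proof (cases "k < m")
    case True
    show ?thesis unfolding cont_Suc'[OF True]
    proof (rule sum_mono)
      fix j assume j: "j \<in> {..<m}"
      have c0: "cont m \<pi> f g sg t j \<ge> 0" by (rule cont_nn[OF g sg])
      have "(1 - sg j) * cont m \<pi> f g sg t j \<le> 1 * cont m \<pi> f g (\<lambda>_. 0) t j"
        using sg[of j] j c0 Suc.IH[of j] by (intro mult_mono) auto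
      then have "(1 - sg j) * cont m \<pi> f g sg t j * chain_P \<pi> f j k \<le> (1 - 0) * cont m \<pi> f g (\<lambda>_. 0) t j * chain_P \<pi> f j k"
        using P_nn[of j k] j True by (intro mult_right_mono) auto
      then show "(if absorbing f j then 0 else (1 - sg j) * cont m \<pi> f g sg t j * chain_P \<pi> f j k)
         \<le> (if absorbing f j then 0 else (1 - 0) * cont m \<pi> f g (\<lambda>_. 0) t j * chain_P \<pi> f j k)" by simp
    qed
  qed simp
qed

lemma mass:
  "(\<Sum>k<m. cont m \<pi> f g sg (Suc t) k) = (\<Sum>j<m. (if absorbing f j then 0 else (1 - sg j) * cont m \<pi> f g sg t j))"
proof -
  have "(\<Sum>k<m. cont m \<pi> f g sg (Suc t) k) =
     (\<Sum>k<m. \<Sum>j<m. (if absorbing f j then 0 else (1 - sg j) * cont m \<pi> f g sg t j) * chain_P \<pi> f j k)"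
  proof (intro sum.cong refl)
    fix k assume "k \<in> {..<m}"
    then have "cont m \<pi> f g sg (Suc t) k =
      (\<Sum>j<m. (if absorbing f j then 0 else (1 - sg j) * cont m \<pi> f g sg t j * chain_P \<pi> f j k))"
      by (simp add: cont_Suc' del: cont.simps(2))
    also have "\<dots> = (\<Sum>j<m. (if absorbing f j then 0 else (1 - sg j) * cont m \<pi> f g sg t j) * chain_P \<pi> f j k)"
      by (rule sum.cong) auto
    finally show "cont m \<pi> f g sg (Suc t) k = \<dots>" .
  qed
  also have "\<dots> = (\<Sum>j<m. (if absorbing f j then 0 else (1 - sg j) * cont m \<pi> f g sg t j) * (\<Sum>k<m. chain_P \<pi> f j k))"
    unfolding sum_distrib_left by (rule sum.swap)
  also have "\<dots> = (\<Sum>j<m. (if absorbing f j then 0 else (1 - sg j) * cont m \<pi> f g sg t j))"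
    by (intro sum.cong refl) (simp add: P_row)
  finally show ?thesis .
qed

lemma ends_step:
  "(\<Sum>j<m. ends m \<pi> f g sg t j) = (\<Sum>j<m. cont m \<pi> f g sg t j) - (\<Sum>k<m. cont m \<pi> f g sg (Suc t) k)"
proof -
  have "(\<Sum>j<m. cont m \<pi> f g sg t j) = (\<Sum>j<m. ends m \<pi> f g sg t j + (if absorbing f j then 0 else (1 - sg j) * cont m \<pi> f g sg t j))"
    by (intro sum.cong refl) (simp add: ends_def algebra_simps)
  then show ?thesis unfolding mass by (simp add: sum.distrib)
qed

lemma ends_partial:
  "(\<Sum>t<n. \<Sum>j<m. ends m \<pi> f g sg t j) = (\<Sum>j<m. cont m \<pi> f g sg 0 j) - (\<Sum>j<m. cont m \<pi> f g sg n j)"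
  by (induction n) (auto simp: ends_step)

end


context proto_pi begin

abbreviation C :: "(nat \<Rightarrow> real) \<Rightarrow> nat \<Rightarrow> nat \<Rightarrow> real" where
  "C g t k \<equiv> cont m \<pi> f g (\<lambda>_. 0) t k"
abbreviation P :: "nat \<Rightarrow> nat \<Rightarrow> real" where
  "P i k \<equiv> chain_P \<pi> f i k"

definition R :: "(nat \<Rightarrow> real) \<Rightarrow> nat \<Rightarrow> real" where
  "R g t = (\<Sum>j\<in>Tr. C g t j)"

lemma C_nn: "(\<And>j. j < m \<Longrightarrow> g j \<ge> 0) \<Longrightarrow> C g t k \<ge> 0"
  by (rule cont_nn) auto

lemma C_Suc: "k < m \<Longrightarrow> C g (Suc t) k = (\<Sum>j\<in>Tr. C g t j * P j k)"
proof -
  assume k: "k < m"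
  have "C g (Suc t) k = (\<Sum>j<m. (if absorbing f j then 0 else (1 - 0) * C g t j * P j k))"
    by (rule cont_Suc'[OF k])
  also have "\<dots> = (\<Sum>j\<in>Tr. C g t j * P j k)" using sum_Tr[of "\<lambda>j. C g t j * P j k"] by (simp cong: if_cong)
  finally show ?thesis .
qed

lemma mass0: "(\<Sum>k<m. C g (Suc t) k) = R g t"
  using mass[of g "\<lambda>_. 0" t] sum_Tr[of "\<lambda>j. C g t j"] unfolding R_def by (simp cong: if_cong)

lemma R_le_tot: "(\<And>j. j < m \<Longrightarrow> g j \<ge> 0) \<Longrightarrow> R g t \<le> (\<Sum>k<m. C g t k)"
  unfolding R_def using Tr_sub C_nn by (intro sum_mono2) auto

lemma R_nn: "(\<And>j. j < m \<Longrightarrow> g j \<ge> 0) \<Longrightarrow> R g t \<ge> 0"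
  unfolding R_def using C_nn by (intro sum_nonneg) auto

lemma tot_le: "(\<And>j. j < m \<Longrightarrow> g j \<ge> 0) \<Longrightarrow> (\<Sum>k<m. C g t k) \<le> (\<Sum>k<m. g k)"
proof (induction t)
  case 0 then show ?case by simp
next
  case (Suc t)
  then show ?case using mass0[of g t] R_le_tot[of g t] by simp
qed

lemma R_Suc_le: "(\<And>j. j < m \<Longrightarrow> g j \<ge> 0) \<Longrightarrow> R g (Suc t) \<le> R g t"
  using R_le_tot[of g "Suc t"] mass0[of g t] by simp

lemma R_mono: "(\<And>j. j < m \<Longrightarrow> g j \<ge> 0) \<Longrightarrow> t \<le> t' \<Longrightarrow> R g t' \<le> R g t"
  using lift_Suc_antimono_le[of "R g"] R_Suc_le by blast

lemma semigroup: "C g (s + t) k = C (\<lambda>j. C g s j) t k"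
proof (induction t arbitrary: k)
  case 0 then show ?case by (simp add: cont_out)
next
  case (Suc t)
  then show ?case by (simp cong: if_cong)
qed

lemma linear: "C g t k = (\<Sum>i<m. g i * C (dlt i) t k)"
proof (induction t arbitrary: k)
  case 0
  show ?case by (simp add: dlt_def if_distrib[of "\<lambda>x. _ * x"] sum.delta' cong: if_cong)
next
  case (Suc t)
  show ?case
  proof (cases "k < m")
    case True
    have "C g (Suc t) k = (\<Sum>j\<in>Tr. C g t j * P j k)" by (rule C_Suc[OF True])
    also have "\<dots> = (\<Sum>j\<in>Tr. \<Sum>i<m. g i * C (dlt i) t j * P j k)"
      using Suc.IH by (simp add: sum_distrib_right)
    also have "\<dots> = (\<Sum>i<m. \<Sum>j\<in>Tr. g i * C (dlt i) t j * P j k)" by (rule sum.swap)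
    also have "\<dots> = (\<Sum>i<m. g i * C (dlt i) (Suc t) k)"
      by (intro sum.cong refl) (simp add: C_Suc[OF True] sum_distrib_left mult.assoc del: cont.simps(2))
    finally show ?thesis .
  qed (simp add: cont_out)
qed

lemma dlt_nn: "dlt i j \<ge> 0" unfolding dlt_def by simp
lemma dlt_sum: "i < m \<Longrightarrow> (\<Sum>j<m. dlt i j) = 1" unfolding dlt_def by simp

lemma C_abs_start: "a = h \<or> a = l \<Longrightarrow> C (dlt a) (Suc t) k = 0"
proof (induction t arbitrary: k)
  case 0
  show ?case
  proof (cases "k < m")
    case True
    have "a \<notin> Tr" using 0 unfolding Tr_def by auto
    then show ?thesis using C_Suc[OF True, of "dlt a" 0] Tr_sub by (auto simp: dlt_def intro!: sum.neutral)
  qed (simp add: cont_out)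
next
  case (Suc t)
  show ?case
  proof (cases "k < m")
    case True
    then show ?thesis using C_Suc[OF True, of "dlt a" "Suc t"] Suc by simp
  qed (simp add: cont_out)
qed

lemma R_abs: "a = h \<or> a = l \<Longrightarrow> R (dlt a) t = 0"
proof (cases t)
  case 0
  assume "a = h \<or> a = l"
  then have "a \<notin> Tr" unfolding Tr_def by auto
  then show ?thesis using 0 unfolding R_def using Tr_sub by (auto simp: dlt_def intro!: sum.neutral)
next
  case (Suc t')
  assume "a = h \<or> a = l"
  then show ?thesis using Suc C_abs_start unfolding R_def by simp
qed

lemma R_start: "i \<in> Tr \<Longrightarrow> R (dlt i) 0 = 1"
  unfolding R_def using Tr_sub finTr by (auto simp: dlt_def subset_eq)

lemma C1: "i \<in> Tr \<Longrightarrow> k < m \<Longrightarrow> C (dlt i) 1 k = P i k"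
proof -
  assume i: "i \<in> Tr" and k: "k < m"
  have "C (dlt i) 1 k = (\<Sum>j\<in>Tr. C (dlt i) 0 j * P j k)" using C_Suc[OF k, of "dlt i" 0] by simp
  also have "\<dots> = (\<Sum>j\<in>Tr. (if j = i then P j k else 0))"
    by (rule sum.cong) (use Tr_sub in \<open>auto simp: dlt_def\<close>)
  also have "\<dots> = P i k" using i finTr by simp
  finally show ?thesis .
qed

lemma first_step: "i \<in> Tr \<Longrightarrow> C (dlt i) (Suc t) k = (\<Sum>y<m. P i y * C (dlt y) t k)"
proof -
  assume i: "i \<in> Tr"
  have "C (dlt i) (Suc t) k = C (dlt i) (1 + t) k" by simp
  also have "\<dots> = C (\<lambda>j. C (dlt i) 1 j) t k" by (rule semigroup)
  also have "\<dots> = (\<Sum>y<m. C (dlt i) 1 y * C (dlt y) t k)" by (rule linear)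
  also have "\<dots> = (\<Sum>y<m. P i y * C (dlt y) t k)" using C1[OF i] by simp
  finally show ?thesis .
qed

lemma R_first: "i \<in> Tr \<Longrightarrow> R (dlt i) (Suc t) = (\<Sum>y<m. P i y * R (dlt y) t)"
proof -
  assume i: "i \<in> Tr"
  have "R (dlt i) (Suc t) = (\<Sum>j\<in>Tr. \<Sum>y<m. P i y * C (dlt y) t j)"
    unfolding R_def using first_step[OF i] by simp
  also have "\<dots> = (\<Sum>y<m. \<Sum>j\<in>Tr. P i y * C (dlt y) t j)" by (rule sum.swap)
  also have "\<dots> = (\<Sum>y<m. P i y * R (dlt y) t)" unfolding R_def by (simp add: sum_distrib_left)
  finally show ?thesis .
qed

lemma R_dlt_nn: "R (dlt y) t \<ge> 0" by (rule R_nn) (simp add: dlt_nn)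

lemma R_dlt_le1: "y < m \<Longrightarrow> R (dlt y) t \<le> 1"
  using R_le_tot[of "dlt y" t] tot_le[of "dlt y" t] dlt_sum[of y] dlt_nn by simp

end


context proto begin

lemma edges0_lt: "(i, k) \<in> edges0 m f \<Longrightarrow> i < m \<and> k < m"
  unfolding edges0_def by auto

lemma reach_abs: "i < m \<Longrightarrow> \<exists>a. (a = h \<or> a = l) \<and> (i, a) \<in> (edges0 m f)\<^sup>*"
proof -
  assume im: "i < m"
  define E where "E = edges0 m f"
  define Rch where "Rch = (\<lambda>y. {z. (y, z) \<in> E\<^sup>*})"
  have Rch_sub: "Rch y \<subseteq> insert y {..<m}" for y
  proof
    fix z assume "z \<in> Rch y"
    then have "(y, z) \<in> E\<^sup>*" unfolding Rch_def by simp
    then show "z \<in> insert y {..<m}"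
    proof (cases rule: rtranclE)
      case (step w)
      then show ?thesis using edges0_lt unfolding E_def by auto
    qed simp
  qed
  have finR: "finite (Rch y)" for y using Rch_sub finite_subset by (metis finite_insert finite_lessThan)
  define cs where "cs = (\<lambda>w. card (Rch w)) ` Rch i"
  have ne: "cs \<noteq> {}" unfolding cs_def Rch_def by auto
  have fin2: "finite cs" using finR unfolding cs_def by simp
  obtain z where zR: "z \<in> Rch i" and zmin: "card (Rch z) = Min cs"
    using Min_in[OF fin2 ne] unfolding cs_def by auto
  have zmin': "card (Rch z) \<le> card (Rch w)" if "w \<in> Rch i" for w
    using zmin that fin2 unfolding cs_def by simp
  have bk: "(w, z) \<in> E\<^sup>*" if "(z, w) \<in> E\<^sup>*" for w
  proof -
    have wR: "w \<in> Rch i" using zR that unfolding Rch_def by auto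
    have sub: "Rch w \<subseteq> Rch z" using that unfolding Rch_def by auto
    have "card (Rch z) \<le> card (Rch w)" by (rule zmin'[OF wR])
    moreover have "card (Rch w) \<le> card (Rch z)" using card_mono[OF finR sub] .
    ultimately have "card (Rch w) = card (Rch z)" by linarith
    then have "Rch w = Rch z" using card_subset_eq[OF finR sub] by blast
    moreover have "z \<in> Rch z" unfolding Rch_def by simp
    ultimately show ?thesis unfolding Rch_def by auto
  qed
  have zm: "z < m" using zR Rch_sub[of i] im by auto
  have "z = h \<or> z = l"
  proof (rule ccontr)
    assume "\<not> (z = h \<or> z = l)"
    then obtain w where "(z, w) \<in> E\<^sup>*" "(w, z) \<notin> E\<^sup>*" using trans[OF zm] unfolding E_def by auto
    then show False using bk by auto
  qed
  then show ?thesis using zR unfolding Rch_def E_def by auto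
qed

end

context proto_pi begin

lemma R_lt1: "i < m \<Longrightarrow> \<exists>k. R (dlt i) k < 1"
proof -
  assume im: "i < m"
  obtain a where a: "a = h \<or> a = l" and path: "(i, a) \<in> (edges0 m f)\<^sup>*" using reach_abs[OF im] by auto
  have "i < m \<longrightarrow> (\<exists>k. R (dlt i) k < 1)"
    using path
  proof (induction rule: converse_rtrancl_induct)
    case base
    show ?case using R_abs[OF a, of 0] by (intro impI exI[of _ 0]) simp
  next
    case (step y z)
    have yz: "y < m" "z < m" using step.hyps(1) edges0_lt by auto
    obtain k where k: "R (dlt z) k < 1" using step.IH yz by auto
    show ?case
    proof (cases "y \<in> Tr")
      case False
      then have "y = h \<or> y = l" using yz unfolding Tr_def by auto
      then have "R (dlt y) 0 = 0" by (rule R_abs)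
      then show ?thesis by (intro impI exI[of _ 0]) simp
    next
      case True
      have Pyz: "P y z > 0" using step.hyps(1) P_pos_iff[OF yz] unfolding edges0_def by auto
      have nn: "\<And>w. w \<in> {..<m} \<Longrightarrow> P y w * (1 - R (dlt w) k) \<ge> 0"
        using P_nn R_dlt_le1 yz by (intro mult_nonneg_nonneg) auto
      have "P y z * (1 - R (dlt z) k) \<le> (\<Sum>w<m. P y w * (1 - R (dlt w) k))"
        using nn yz by (intro member_le_sum) auto
      moreover have "(\<Sum>w<m. P y w * (1 - R (dlt w) k)) = 1 - (\<Sum>w<m. P y w * R (dlt w) k)"
        using P_row[OF yz(1)] by (simp add: algebra_simps sum_subtractf)
      moreover have "P y z * (1 - R (dlt z) k) > 0" using Pyz k by simp
      ultimately have "R (dlt y) (Suc k) < 1" using R_first[OF True, of k] by simp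
      then show ?thesis by auto
    qed
  qed
  then show ?thesis using im by auto
qed

lemma uniform: "\<exists>K b. K > 0 \<and> b < 1 \<and> 0 \<le> b \<and> (\<forall>i<m. R (dlt i) K \<le> b)"
proof -
  obtain kf where kf: "\<forall>i<m. R (dlt i) (kf i) < 1" using R_lt1 by metis
  define K where "K = Suc (Max (kf ` {..<m}))"
  have kK: "kf i \<le> K" if "i < m" for i
    unfolding K_def using that by (simp add: le_SucI)
  define b where "b = Max ((\<lambda>i. R (dlt i) K) ` {..<m})"
  have m0: "{..<m} \<noteq> {}" using hm by auto
  have bin: "b \<in> (\<lambda>i. R (dlt i) K) ` {..<m}" unfolding b_def using m0 by (intro Max_in) auto
  then obtain i0 where i0: "i0 < m" "b = R (dlt i0) K" by auto
  have "R (dlt i0) K \<le> R (dlt i0) (kf i0)" using kK[OF i0(1)] by (intro R_mono) (auto simp: dlt_nn)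
  then have b1: "b < 1" using kf i0 by auto
  have b0: "0 \<le> b" using i0 R_dlt_nn by simp
  have "\<forall>i<m. R (dlt i) K \<le> b" unfolding b_def by auto
  then show ?thesis using b1 b0 unfolding K_def by blast
qed

end


context proto_pi begin

lemma decay:
  assumes g: "\<And>j. j < m \<Longrightarrow> g j \<ge> 0" and Kb: "\<forall>i<m. R (dlt i) K \<le> b"
  shows "R g (s + K) \<le> b * R g s"
proof -
  have "R g (s + K) = (\<Sum>j\<in>Tr. C (\<lambda>y. C g s y) K j)" unfolding R_def semigroup ..
  also have "\<dots> = (\<Sum>j\<in>Tr. \<Sum>y<m. C g s y * C (dlt y) K j)" by (rule sum.cong[OF refl], rule linear)
  also have "\<dots> = (\<Sum>y<m. \<Sum>j\<in>Tr. C g s y * C (dlt y) K j)" by (rule sum.swap)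
  also have "\<dots> = (\<Sum>y<m. C g s y * R (dlt y) K)" unfolding R_def by (simp add: sum_distrib_left)
  also have "\<dots> = (\<Sum>y\<in>Tr. C g s y * R (dlt y) K)"
    using sum_split3[of "\<lambda>y. C g s y * R (dlt y) K"] R_abs[of h K] R_abs[of l K] by simp
  also have "\<dots> \<le> (\<Sum>y\<in>Tr. C g s y * b)"
    using Kb Tr_sub C_nn[of g, OF g] by (intro sum_mono mult_left_mono) auto
  also have "\<dots> = (\<Sum>y\<in>Tr. C g s y) * b" by (simp add: sum_distrib_right)
  also have "\<dots> = b * R g s" unfolding R_def by simp
  finally show ?thesis .
qed

lemma R_geom:
  assumes g: "\<And>j. j < m \<Longrightarrow> g j \<ge> 0" and gs: "(\<Sum>j<m. g j) = 1"
    and Kb: "\<forall>i<m. R (dlt i) K \<le> b" and b0: "b \<ge> 0"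
  shows "R g (n * K) \<le> b ^ n"
proof (induction n)
  case 0
  have "R g 0 \<le> (\<Sum>k<m. C g 0 k)" by (rule R_le_tot) (rule g)
  also have "\<dots> \<le> (\<Sum>k<m. g k)" by (rule tot_le) (rule g)
  finally show ?case using gs by simp
next
  case (Suc n)
  have "R g (Suc n * K) = R g (n * K + K)" by (simp add: add.commute)
  also have "\<dots> \<le> b * R g (n * K)" by (rule decay[OF g Kb])
  also have "\<dots> \<le> b * b ^ n" using Suc.IH b0 by (intro mult_left_mono) auto
  finally show ?case by simp
qed

lemma R_summable:
  assumes g: "\<And>j. j < m \<Longrightarrow> g j \<ge> 0" and gs: "(\<Sum>j<m. g j) = 1"
  shows "summable (R g)"
proof -
  obtain K b where K0: "K > 0" and b1: "b < 1" and b0: "0 \<le> b" and Kb: "\<forall>i<m. R (dlt i) K \<le> b"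
    using uniform by blast
  define b' where "b' = max b (1/2)"
  have b'0: "b' > 0" and b'1: "b' < 1" and bb': "b \<le> b'" unfolding b'_def using b1 by auto
  define \<rho> where "\<rho> = root K b'"
  have \<rho>0: "\<rho> > 0" unfolding \<rho>_def using K0 b'0 by simp
  have \<rho>1: "\<rho> < 1" unfolding \<rho>_def using K0 b'1 by (simp add: real_root_lt_1_iff)
  have \<rho>K: "\<rho> ^ K = b'" unfolding \<rho>_def using K0 b'0 by (simp add: real_root_pow_pos)
  have bound: "R g t \<le> \<rho> ^ t / b'" for t
  proof -
    define n where "n = t div K"
    have tn: "n * K \<le> t" unfolding n_def by (simp add: div_times_less_eq_dividend)
    have tn2: "t \<le> n * K + K" unfolding n_def
      using div_mult_mod_eq[of t K] mod_less_divisor[OF K0, of t] by linarith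
    have "R g t \<le> R g (n * K)" using tn by (intro R_mono g) auto
    also have "\<dots> \<le> b ^ n" by (rule R_geom[OF g gs Kb b0])
    also have "\<dots> \<le> b' ^ n" using b0 bb' by (intro power_mono) auto
    also have "\<dots> = \<rho> ^ (n * K)" using \<rho>K by (simp add: power_mult mult.commute)
    also have "\<dots> = \<rho> ^ (n * K + K) / b'" using \<rho>K b'0 by (simp add: power_add)
    also have "\<dots> \<le> \<rho> ^ t / b'" using tn2 \<rho>0 \<rho>1 b'0
      by (intro divide_right_mono power_decreasing) auto
    finally show ?thesis .
  qed
  have sg: "summable (\<lambda>t. \<rho> ^ t / b')" using \<rho>0 \<rho>1 by (intro summable_divide summable_geometric) simp
  show ?thesis
  proof (rule summable_comparison_test'[OF sg])
    fix n :: nat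
    have "R g n \<ge> 0" by (rule R_nn) (rule g)
    then show "norm (R g n) \<le> \<rho> ^ n / b'" using bound[of n] by simp
  qed
qed

lemma C_summable:
  assumes g: "\<And>j. j < m \<Longrightarrow> g j \<ge> 0" and gs: "(\<Sum>j<m. g j) = 1"
  shows "summable (\<lambda>t. C g t x)"
proof (cases "x < m")
  case True
  have Cb: "C g (Suc t) x \<le> R g t" for t
  proof -
    have "C g (Suc t) x = (\<Sum>j\<in>Tr. C g t j * P j x)" by (rule C_Suc[OF True])
    also have "\<dots> \<le> (\<Sum>j\<in>Tr. C g t j * 1)"
      using C_nn[of g, OF g] P_le1 True Tr_sub by (intro sum_mono mult_left_mono) auto
    finally show ?thesis unfolding R_def by simp
  qed
  have "summable (\<lambda>t. C g (Suc t) x)"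
  proof (rule summable_comparison_test'[OF R_summable[OF g gs]])
    fix n :: nat
    have "C g (Suc n) x \<ge> 0" by (rule C_nn) (rule g)
    then show "norm (C g (Suc n) x) \<le> R g n" using Cb[of n] by simp
  qed
  then show ?thesis by (rule iffD1[OF summable_Suc_iff])
next
  case False
  then show ?thesis by (simp add: cont_out)
qed

lemma C_le_suminf:
  assumes g: "\<And>j. j < m \<Longrightarrow> g j \<ge> 0" and gs: "(\<Sum>j<m. g j) = 1"
  shows "C g t x \<le> (\<Sum>n. C g n x)"
  using sum_le_suminf[OF C_summable[OF g gs], of "{t}"] C_nn[of g, OF g] by auto

definition N :: "nat \<Rightarrow> nat \<Rightarrow> real" where
  "N i x = (\<Sum>t. C (dlt i) t x)"

lemma N_nn: "i < m \<Longrightarrow> N i x \<ge> 0"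
  unfolding N_def using C_nn[of "dlt i"] dlt_nn by (intro suminf_nonneg C_summable) (auto simp: dlt_sum)

lemma Csum: "i < m \<Longrightarrow> summable (\<lambda>t. C (dlt i) t x)"
  by (rule C_summable) (auto simp: dlt_nn dlt_sum)

lemma balance:
  assumes i0: "i0 \<in> Tr" and x: "x < m"
  shows "N i0 x = (if x = i0 then 1 else 0) + (\<Sum>y\<in>Tr. N i0 y * P y x)"
proof -
  have im: "i0 < m" using i0 Tr_sub by auto
  have "N i0 x = C (dlt i0) 0 x + (\<Sum>t. C (dlt i0) (Suc t) x)"
    unfolding N_def using suminf_split_head[OF Csum[OF im]] by simp
  also have "C (dlt i0) 0 x = (if x = i0 then 1 else 0)" using x by (simp add: dlt_def)
  also have "(\<Sum>t. C (dlt i0) (Suc t) x) = (\<Sum>t. \<Sum>y\<in>Tr. C (dlt i0) t y * P y x)"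
    using C_Suc[OF x] by simp
  also have "\<dots> = (\<Sum>y\<in>Tr. \<Sum>t. C (dlt i0) t y * P y x)"
    by (rule suminf_sum) (intro summable_mult2 Csum[OF im])
  also have "\<dots> = (\<Sum>y\<in>Tr. N i0 y * P y x)"
    unfolding N_def by (intro sum.cong refl suminf_mult2[symmetric] Csum[OF im])
  finally show ?thesis .
qed

lemma absorbed:
  assumes i0: "i0 \<in> Tr"
  shows "N i0 h + N i0 l = 1"
proof -
  have im: "i0 < m" using i0 Tr_sub by auto
  have g: "\<And>j. j < m \<Longrightarrow> dlt i0 j \<ge> 0" by (simp add: dlt_nn)
  have gs: "(\<Sum>j<m. dlt i0 j) = 1" using dlt_sum[OF im] .
  have step: "C (dlt i0) (Suc t) h + C (dlt i0) (Suc t) l = R (dlt i0) t - R (dlt i0) (Suc t)" for t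
    using mass0[of "dlt i0" t] sum_split3[of "\<lambda>k. C (dlt i0) (Suc t) k"] unfolding R_def by simp
  have TS: "(\<lambda>t. R (dlt i0) t - R (dlt i0) (Suc t)) sums (R (dlt i0) 0 - 0)"
    by (rule telescope_sums'[OF summable_LIMSEQ_zero[OF R_summable[OF g gs]]])
  define F where "F = (\<lambda>t. C (dlt i0) t h + C (dlt i0) t l)"
  have "(\<lambda>t. F (Suc t)) sums 1"
    using TS R_start[OF i0] step unfolding F_def by (simp del: cont.simps)
  then have "F sums (1 + F 0)" by (rule iffD1[OF sums_Suc_iff])
  then have "(\<lambda>t. C (dlt i0) t h + C (dlt i0) t l) sums (1 + (C (dlt i0) 0 h + C (dlt i0) 0 l))"
    unfolding F_def .
  moreover have "C (dlt i0) 0 h + C (dlt i0) 0 l = 0" using i0 hm lm unfolding Tr_def by (simp add: dlt_def)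
  ultimately have "(\<lambda>t. C (dlt i0) t h + C (dlt i0) t l) sums 1" by simp
  moreover have "(\<lambda>t. C (dlt i0) t h + C (dlt i0) t l) sums (N i0 h + N i0 l)"
    unfolding N_def by (intro sums_add summable_sums Csum[OF im])
  ultimately show ?thesis using sums_unique2 by blast
qed

lemma reach_in:
  assumes i0: "i0 \<in> Tr" and ST: "S \<subseteq> Tr" and i0S: "i0 \<notin> S" and z: "z \<in> S" and Nz: "N i0 z > 0"
  shows "(\<Sum>y\<in>Tr-S. \<Sum>x\<in>S. N i0 y * P y x) > 0"
proof (rule ccontr)
  assume neg: "\<not> ?thesis"
  have im: "i0 < m" using i0 Tr_sub by auto
  have nn: "N i0 y * P y x \<ge> 0" if "y \<in> Tr" "x \<in> S" for y x
  proof -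
    have "y < m" "x < m" using that ST Tr_sub by auto
    then show ?thesis using N_nn[OF im] P_nn by (intro mult_nonneg_nonneg) auto
  qed
  have fS: "finite S" using finTr ST finite_subset by blast
  have "0 \<le> (\<Sum>y\<in>Tr-S. \<Sum>x\<in>S. N i0 y * P y x)"
    using nn by (intro sum_nonneg) auto
  then have "(\<Sum>y\<in>Tr-S. \<Sum>x\<in>S. N i0 y * P y x) = 0"
    using neg by linarith
  then have z1: "(\<Sum>x\<in>S. N i0 y * P y x) = 0" if "y \<in> Tr - S" for y
    using that nn finTr sum_nonneg_eq_0_iff[of "Tr - S" "\<lambda>y. \<Sum>x\<in>S. N i0 y * P y x"]
    by (simp add: sum_nonneg)
  have zero: "N i0 y * P y x = 0" if "y \<in> Tr - S" "x \<in> S" for y x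
    using z1[OF that(1)] that nn fS sum_nonneg_eq_0_iff[of S "\<lambda>x. N i0 y * P y x"] by auto
  have "C (dlt i0) t x = 0" if "x \<in> S" for t x
    using that
  proof (induction t arbitrary: x)
    case 0
    then show ?case using i0S ST Tr_sub by (auto simp: dlt_def)
  next
    case (Suc t)
    have xm: "x < m" using Suc.prems ST Tr_sub by auto
    have "C (dlt i0) (Suc t) x = (\<Sum>y\<in>Tr. C (dlt i0) t y * P y x)" by (rule C_Suc[OF xm])
    also have "\<dots> = 0"
    proof (rule sum.neutral, rule ballI)
      fix y assume y: "y \<in> Tr"
      show "C (dlt i0) t y * P y x = 0"
      proof (cases "y \<in> S")
        case True then show ?thesis using Suc.IH by simp
      next
        case False
        then have "N i0 y * P y x = 0" using zero y Suc.prems by auto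
        then have "N i0 y = 0 \<or> P y x = 0" by simp
        moreover have "0 \<le> C (dlt i0) t y" using C_nn[of "dlt i0"] dlt_nn by auto
        moreover have "C (dlt i0) t y \<le> N i0 y" unfolding N_def
          by (rule C_le_suminf) (auto simp: dlt_nn dlt_sum im)
        ultimately show ?thesis by auto
      qed
    qed
    finally show ?case .
  qed
  then have "N i0 z = 0" unfolding N_def using z by simp
  then show False using Nz by simp
qed

end


lemma sum_pos_iff_ex:
  fixes F :: "'a \<Rightarrow> real"
  assumes "finite A" "\<And>a. a \<in> A \<Longrightarrow> F a \<ge> 0"
  shows "(\<Sum>a\<in>A. F a) > 0 \<longleftrightarrow> (\<exists>a\<in>A. F a > 0)"
proof -
  have "(\<Sum>a\<in>A. F a) \<ge> 0" using assms by (intro sum_nonneg) auto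
  moreover have "(\<Sum>a\<in>A. F a) = 0 \<longleftrightarrow> (\<forall>a\<in>A. F a = 0)" using sum_nonneg_eq_0_iff[OF assms] .
  ultimately show ?thesis using assms(2) by (auto simp: order.strict_iff_order)
qed

context proto begin

lemma pp: "valid_signal_dist \<pi> \<Longrightarrow> proto_pi m f h l \<pi>"
  by (rule proto_pi.intro[OF proto_axioms]) (simp add: proto_pi_axioms_def)

lemma pos_pattern:
  assumes v1: "valid_signal_dist \<pi>1" and v2: "valid_signal_dist \<pi>2" and g: "\<And>j. j < m \<Longrightarrow> g j \<ge> 0"
  shows "cont m \<pi>1 f g (\<lambda>_. 0) t x > 0 \<longleftrightarrow> cont m \<pi>2 f g (\<lambda>_. 0) t x > 0"
proof -
  interpret A: proto_pi m f h l \<pi>1 by (rule pp[OF v1])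
  interpret B: proto_pi m f h l \<pi>2 by (rule pp[OF v2])
  show ?thesis
  proof (induction t arbitrary: x)
    case 0 show ?case by simp
  next
    case (Suc t)
    show ?case
    proof (cases "x < m")
      case True
      have nA: "\<And>j. j \<in> Tr \<Longrightarrow> A.C g t j * A.P j x \<ge> 0"
        using A.C_nn g A.P_nn True Tr_sub by (intro mult_nonneg_nonneg) auto
      have nB: "\<And>j. j \<in> Tr \<Longrightarrow> B.C g t j * B.P j x \<ge> 0"
        using B.C_nn g B.P_nn True Tr_sub by (intro mult_nonneg_nonneg) auto
      have eq: "A.C g t j * A.P j x > 0 \<longleftrightarrow> B.C g t j * B.P j x > 0" if j: "j \<in> Tr" for j
      proof -
        have jm: "j < m" using j Tr_sub by auto
        have a1: "A.C g t j \<ge> 0" "A.P j x \<ge> 0" using A.C_nn g A.P_nn jm True by auto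
        have b1: "B.C g t j \<ge> 0" "B.P j x \<ge> 0" using B.C_nn g B.P_nn jm True by auto
        have "A.C g t j * A.P j x > 0 \<longleftrightarrow> A.C g t j > 0 \<and> A.P j x > 0"
          using a1 by (auto simp: zero_less_mult_iff)
        moreover have "B.C g t j * B.P j x > 0 \<longleftrightarrow> B.C g t j > 0 \<and> B.P j x > 0"
          using b1 by (auto simp: zero_less_mult_iff)
        moreover have "A.P j x > 0 \<longleftrightarrow> B.P j x > 0" using A.P_pos_iff B.P_pos_iff jm True by simp
        ultimately show ?thesis using Suc.IH[of j] by simp
      qed
      have "A.C g (Suc t) x > 0 \<longleftrightarrow> (\<exists>j\<in>Tr. A.C g t j * A.P j x > 0)"
        unfolding A.C_Suc[OF True] by (rule sum_pos_iff_ex[OF finTr nA])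
      also have "\<dots> \<longleftrightarrow> (\<exists>j\<in>Tr. B.C g t j * B.P j x > 0)" using eq by auto
      also have "\<dots> \<longleftrightarrow> B.C g (Suc t) x > 0"
        unfolding B.C_Suc[OF True] by (rule sum_pos_iff_ex[OF finTr nB, symmetric])
      finally show ?thesis .
    qed (simp add: A.cont_out)
  qed
qed

lemma N_pos_iff:
  assumes v1: "valid_signal_dist \<pi>1" and v2: "valid_signal_dist \<pi>2" and i: "i < m"
  shows "proto_pi.N m f \<pi>1 i x > 0 \<longleftrightarrow> proto_pi.N m f \<pi>2 i x > 0"
proof -
  interpret A: proto_pi m f h l \<pi>1 by (rule pp[OF v1])
  interpret B: proto_pi m f h l \<pi>2 by (rule pp[OF v2])
  have "A.N i x > 0 \<longleftrightarrow> (\<exists>t. A.C (dlt i) t x > 0)"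
    unfolding A.N_def using A.Csum[OF i] A.C_nn A.dlt_nn by (intro suminf_pos_iff) auto
  also have "\<dots> \<longleftrightarrow> (\<exists>t. B.C (dlt i) t x > 0)" using pos_pattern[OF v1 v2, of "dlt i"] A.dlt_nn by auto
  also have "\<dots> \<longleftrightarrow> B.N i x > 0"
    unfolding B.N_def using B.Csum[OF i] B.C_nn B.dlt_nn by (intro suminf_pos_iff[symmetric]) auto
  finally show ?thesis .
qed

end

lemma ratio_bounds:
  fixes \<pi>H \<pi>L :: "'s::finite \<Rightarrow> real"
  assumes vH: "valid_signal_dist \<pi>H" and vL: "valid_signal_dist \<pi>L" and neq: "\<pi>H \<noteq> \<pi>L"
  shows "\<And>s. lunder \<pi>H \<pi>L * \<pi>L s \<le> \<pi>H s" "\<And>s. \<pi>H s \<le> lbar \<pi>H \<pi>L * \<pi>L s"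
    and "0 < lunder \<pi>H \<pi>L" "lunder \<pi>H \<pi>L < lbar \<pi>H \<pi>L"
proof -
  have pH: "\<pi>H s > 0" for s using vH unfolding valid_signal_dist_def by auto
  have pL: "\<pi>L s > 0" for s using vL unfolding valid_signal_dist_def by auto
  have sH: "(\<Sum>s\<in>UNIV. \<pi>H s) = 1" using vH unfolding valid_signal_dist_def by auto
  have sL: "(\<Sum>s\<in>UNIV. \<pi>L s) = 1" using vL unfolding valid_signal_dist_def by auto
  define Q where "Q = (\<lambda>s. \<pi>H s / \<pi>L s) ` UNIV"
  have fQ: "finite Q" and neQ: "Q \<noteq> {}" unfolding Q_def by auto
  have lo_le: "lunder \<pi>H \<pi>L \<le> \<pi>H s / \<pi>L s" for s
    unfolding lunder_def using fQ unfolding Q_def by (intro Min_le) auto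
  have hi_ge: "\<pi>H s / \<pi>L s \<le> lbar \<pi>H \<pi>L" for s
    unfolding lbar_def using fQ unfolding Q_def by (intro Max_ge) auto
  show l1: "lunder \<pi>H \<pi>L * \<pi>L s \<le> \<pi>H s" for s
    using lo_le[of s] pL[of s] by (simp add: field_simps)
  show h1: "\<pi>H s \<le> lbar \<pi>H \<pi>L * \<pi>L s" for s
    using hi_ge[of s] pL[of s] by (simp add: field_simps)
  have "lunder \<pi>H \<pi>L \<in> Q" unfolding lunder_def Q_def[symmetric] using fQ neQ by simp
  then show "0 < lunder \<pi>H \<pi>L" unfolding Q_def using pH pL by auto
  show "lunder \<pi>H \<pi>L < lbar \<pi>H \<pi>L"
  proof (rule ccontr)
    assume "\<not> ?thesis"
    then have eq: "lbar \<pi>H \<pi>L \<le> lunder \<pi>H \<pi>L" by simp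
    have "\<pi>H s = lunder \<pi>H \<pi>L * \<pi>L s" for s using l1[of s] h1[of s] eq pL[of s]
      by (smt (verit) mult_right_mono)
    then have "(\<Sum>s\<in>UNIV. \<pi>H s) = lunder \<pi>H \<pi>L * (\<Sum>s\<in>UNIV. \<pi>L s)" by (simp add: sum_distrib_left)
    then have "lunder \<pi>H \<pi>L = 1" using sH sL by simp
    then have "\<pi>H = \<pi>L" using \<open>\<And>s. \<pi>H s = lunder \<pi>H \<pi>L * \<pi>L s\<close> by auto
    then show False using neq by simp
  qed
qed


context proto_pi begin

lemma N_abs: "N h h = 1" "N l h = 0"
proof -
  have "N a h = C (dlt a) 0 h" if a: "a = h \<or> a = l" for a
  proof -
    have "(\<Sum>t. C (dlt a) t h) = (\<Sum>t\<in>{0}. C (dlt a) t h)"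
    proof (rule suminf_finite)
      fix n :: nat assume "n \<notin> {0}"
      then obtain t where "n = Suc t" by (cases n) auto
      then show "C (dlt a) n h = 0" using C_abs_start[OF a] by simp
    qed simp
    then show ?thesis unfolding N_def by simp
  qed
  then show "N h h = 1" "N l h = 0" using hm hl by (auto simp: dlt_def)
qed

lemma ends_nn:
  assumes g: "\<And>j. j < m \<Longrightarrow> g j \<ge> 0" and sg: "\<And>j. j < m \<Longrightarrow> 0 \<le> sg j \<and> sg j \<le> 1"
  shows "ends m \<pi> f g sg t j \<ge> 0"
proof (cases "j < m")
  case True
  have "cont m \<pi> f g sg t j \<ge> 0" by (rule cont_nn[OF g sg])
  then show ?thesis unfolding ends_def using sg[OF True] by simp
next
  case False
  then show ?thesis unfolding ends_def by (simp add: cont_out)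
qed

lemma ends_partial_le:
  assumes g: "\<And>j. j < m \<Longrightarrow> g j \<ge> 0" and gs: "(\<Sum>j<m. g j) = 1"
    and sg: "\<And>j. j < m \<Longrightarrow> 0 \<le> sg j \<and> sg j \<le> 1"
  shows "(\<Sum>t<n. \<Sum>j<m. ends m \<pi> f g sg t j) \<le> 1"
proof -
  have "(\<Sum>j<m. cont m \<pi> f g sg n j) \<ge> 0" using cont_nn[OF g sg] by (intro sum_nonneg) auto
  moreover have "(\<Sum>j<m. cont m \<pi> f g sg 0 j) = 1" using gs by simp
  ultimately show ?thesis using ends_partial[where n=n and g=g and sg=sg] by simp
qed

lemma ends_summable:
  assumes g: "\<And>j. j < m \<Longrightarrow> g j \<ge> 0" and gs: "(\<Sum>j<m. g j) = 1"
    and sg: "\<And>j. j < m \<Longrightarrow> 0 \<le> sg j \<and> sg j \<le> 1"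
  shows "summable (\<lambda>t. \<Sum>j<m. ends m \<pi> f g sg t j)"
    and "(\<Sum>t. \<Sum>j<m. ends m \<pi> f g sg t j) \<le> 1"
proof -
  have nn: "\<And>t. 0 \<le> (\<Sum>j<m. ends m \<pi> f g sg t j)" using ends_nn[OF g sg] by (intro sum_nonneg) auto
  show s: "summable (\<lambda>t. \<Sum>j<m. ends m \<pi> f g sg t j)"
    by (rule summableI_nonneg_bounded[OF nn ends_partial_le[OF g gs sg]])
  show "(\<Sum>t. \<Sum>j<m. ends m \<pi> f g sg t j) \<le> 1"
    by (rule suminf_le_const[OF s ends_partial_le[OF g gs sg]])
qed

lemma cont_h_le_ends:
  assumes g: "\<And>j. j < m \<Longrightarrow> g j \<ge> 0" and sg: "\<And>j. j < m \<Longrightarrow> 0 \<le> sg j \<and> sg j \<le> 1"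
  shows "cont m \<pi> f g sg t h \<le> (\<Sum>j<m. ends m \<pi> f g sg t j)"
proof -
  have "ends m \<pi> f g sg t h = cont m \<pi> f g sg t h" unfolding ends_def using absh by simp
  moreover have "ends m \<pi> f g sg t h \<le> (\<Sum>j<m. ends m \<pi> f g sg t j)"
    using hm ends_nn[OF g sg] by (intro member_le_sum) auto
  ultimately show ?thesis by simp
qed

lemma cont_h_summable:
  assumes g: "\<And>j. j < m \<Longrightarrow> g j \<ge> 0" and gs: "(\<Sum>j<m. g j) = 1"
    and sg: "\<And>j. j < m \<Longrightarrow> 0 \<le> sg j \<and> sg j \<le> 1"
  shows "summable (\<lambda>t. cont m \<pi> f g sg t h)"
proof (rule summable_comparison_test'[OF ends_summable(1)[OF g gs sg]])
  fix n :: nat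
  have "cont m \<pi> f g sg n h \<ge> 0" by (rule cont_nn[OF g sg])
  then show "norm (cont m \<pi> f g sg n h) \<le> (\<Sum>j<m. ends m \<pi> f g sg n j)"
    using cont_h_le_ends[where t=n, OF g sg] by simp
qed

lemma actH_eq:
  assumes ah: "a h = 1" and a0: "\<And>j. j < m \<Longrightarrow> j \<noteq> h \<Longrightarrow> a j = 0"
  shows "prob_actH m \<pi> f g a sg = (\<Sum>t. cont m \<pi> f g sg t h)"
proof -
  have "(\<Sum>j<m. ends m \<pi> f g sg t j * a j) = cont m \<pi> f g sg t h" for t
  proof -
    have "(\<Sum>j<m. ends m \<pi> f g sg t j * a j) = (\<Sum>j<m. if j = h then ends m \<pi> f g sg t h else 0)"
      by (rule sum.cong) (auto simp: ah a0)
    also have "\<dots> = ends m \<pi> f g sg t h" using hm by simp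
    also have "\<dots> = cont m \<pi> f g sg t h" unfolding ends_def using absh by simp
    finally show ?thesis .
  qed
  then show ?thesis unfolding prob_actH_def by simp
qed

lemma actHL_le:
  assumes g: "\<And>j. j < m \<Longrightarrow> g j \<ge> 0" and gs: "(\<Sum>j<m. g j) = 1"
    and sg: "\<And>j. j < m \<Longrightarrow> 0 \<le> sg j \<and> sg j \<le> 1"
    and a: "\<And>j. j < m \<Longrightarrow> 0 \<le> a j \<and> a j \<le> 1"
  shows "prob_actL m \<pi> f g a sg \<le> 1 - prob_actH m \<pi> f g a sg"
proof -
  have E: "summable (\<lambda>t. \<Sum>j<m. ends m \<pi> f g sg t j)" by (rule ends_summable(1)[OF g gs sg])
  have nnA: "0 \<le> (\<Sum>j<m. ends m \<pi> f g sg t j * a j)" for t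
    using ends_nn[OF g sg] a by (intro sum_nonneg mult_nonneg_nonneg) auto
  have nnB: "0 \<le> (\<Sum>j<m. ends m \<pi> f g sg t j * (1 - a j))" for t
    using ends_nn[OF g sg] a by (intro sum_nonneg mult_nonneg_nonneg) auto
  have split: "(\<Sum>j<m. ends m \<pi> f g sg t j * a j) + (\<Sum>j<m. ends m \<pi> f g sg t j * (1 - a j))
        = (\<Sum>j<m. ends m \<pi> f g sg t j)" for t
    by (simp add: sum.distrib[symmetric] algebra_simps)
  have sA: "summable (\<lambda>t. \<Sum>j<m. ends m \<pi> f g sg t j * a j)"
  proof (rule summable_comparison_test'[OF E])
    fix n :: nat show "norm (\<Sum>j<m. ends m \<pi> f g sg n j * a j) \<le> (\<Sum>j<m. ends m \<pi> f g sg n j)"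
      using nnA[of n] nnB[of n] split[of n] by simp
  qed
  have sB: "summable (\<lambda>t. \<Sum>j<m. ends m \<pi> f g sg t j * (1 - a j))"
  proof (rule summable_comparison_test'[OF E])
    fix n :: nat show "norm (\<Sum>j<m. ends m \<pi> f g sg n j * (1 - a j)) \<le> (\<Sum>j<m. ends m \<pi> f g sg n j)"
      using nnA[of n] nnB[of n] split[of n] by simp
  qed
  have "prob_actH m \<pi> f g a sg + prob_actL m \<pi> f g a sg = (\<Sum>t. \<Sum>j<m. ends m \<pi> f g sg t j)"
    unfolding prob_actH_def prob_actL_def using suminf_add[OF sA sB] split by simp
  also have "\<dots> \<le> 1" by (rule ends_summable(2)[OF g gs sg])
  finally show ?thesis by simp
qed

lemma actH_le0:
  assumes g: "\<And>j. j < m \<Longrightarrow> g j \<ge> 0" and gs: "(\<Sum>j<m. g j) = 1"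
    and sg: "\<And>j. j < m \<Longrightarrow> 0 \<le> sg j \<and> sg j \<le> 1"
    and ah: "a h = 1" and a0: "\<And>j. j < m \<Longrightarrow> j \<noteq> h \<Longrightarrow> a j = 0"
  shows "prob_actH m \<pi> f g a sg \<le> (\<Sum>t. C g t h)"
proof -
  have s0: "\<And>j. j < m \<Longrightarrow> 0 \<le> (0::real) \<and> (0::real) \<le> 1" by simp
  have "(\<Sum>t. cont m \<pi> f g sg t h) \<le> (\<Sum>t. C g t h)"
    by (rule suminf_le[OF _ cont_h_summable[OF g gs sg] cont_h_summable[OF g gs s0]])
       (rule cont_le0[OF g sg])
  then show ?thesis using actH_eq[where a=a and g=g and sg=sg, OF ah a0] by simp
qed

lemma C_h_lin:
  assumes g: "\<And>j. j < m \<Longrightarrow> g j \<ge> 0" and gs: "(\<Sum>j<m. g j) = 1"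
  shows "(\<Sum>t. C g t h) = (\<Sum>i<m. g i * N i h)"
proof -
  have "(\<Sum>t. C g t h) = (\<Sum>t. \<Sum>i<m. g i * C (dlt i) t h)" by (rule suminf_cong) (rule linear)
  also have "\<dots> = (\<Sum>i<m. \<Sum>t. g i * C (dlt i) t h)"
    by (rule suminf_sum) (auto intro!: summable_mult Csum)
  also have "\<dots> = (\<Sum>i<m. g i * N i h)"
    unfolding N_def by (intro sum.cong refl) (auto intro!: suminf_mult Csum)
  finally show ?thesis .
qed

end


context proto begin

lemma transient_odds:
  assumes vH: "valid_signal_dist \<pi>H" and vL: "valid_signal_dist \<pi>L" and neq: "\<pi>H \<noteq> \<pi>L"
    and i0: "i0 \<in> Tr"
  defines "uH \<equiv> proto_pi.N m f \<pi>H i0 h" and "uL \<equiv> proto_pi.N m f \<pi>L i0 h"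
  shows "0 \<le> uH \<and> uH \<le> 1 \<and> 0 \<le> uL \<and> uL \<le> 1"
    and "uH * (1 - uL) \<le> gamma \<pi>H \<pi>L ^ (m - 2) * (uL * (1 - uH))"
    and "m \<ge> 4 \<Longrightarrow> 0 < uL \<Longrightarrow> uL < 1 \<Longrightarrow> uH * (1 - uL) < gamma \<pi>H \<pi>L ^ (m - 2) * (uL * (1 - uH))"
    and "uL = 0 \<Longrightarrow> uH = 0" and "uL = 1 \<Longrightarrow> uH = 1"
proof -
  interpret H: proto_pi m f h l \<pi>H by (rule pp[OF vH])
  interpret L: proto_pi m f h l \<pi>L by (rule pp[OF vL])
  define lo where "lo = lunder \<pi>H \<pi>L"
  define hi where "hi = lbar \<pi>H \<pi>L"
  note rb = ratio_bounds[OF vH vL neq, folded lo_def hi_def]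
  have im: "i0 < m" using i0 Tr_sub by auto
  have os: "odds_setup {..<m} Tr i0 (H.N i0) (L.N i0) (chain_P \<pi>H f) (chain_P \<pi>L f) lo hi"
  proof (unfold_locales)
    show "finite {..<m}" by simp
    show "Tr \<subseteq> {..<m}" by (rule Tr_sub)
    show "i0 \<in> Tr" by (rule i0)
    show "\<And>x. x \<in> {..<m} \<Longrightarrow> 0 \<le> H.N i0 x" using H.N_nn[OF im] by simp
    show "\<And>x. x \<in> {..<m} \<Longrightarrow> 0 \<le> L.N i0 x" using L.N_nn[OF im] by simp
    show "\<And>y x. y \<in> Tr \<Longrightarrow> x \<in> {..<m} \<Longrightarrow> 0 \<le> chain_P \<pi>H f y x" using H.P_nn Tr_sub by auto
    show "\<And>y x. y \<in> Tr \<Longrightarrow> x \<in> {..<m} \<Longrightarrow> 0 \<le> chain_P \<pi>L f y x" using L.P_nn Tr_sub by auto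
    show "\<And>y. y \<in> Tr \<Longrightarrow> sum (chain_P \<pi>H f y) {..<m} = 1" using H.P_row Tr_sub by auto
    show "\<And>y. y \<in> Tr \<Longrightarrow> sum (chain_P \<pi>L f y) {..<m} = 1" using L.P_row Tr_sub by auto
    show "0 < lo" by (rule rb(3))
    show "lo < hi" by (rule rb(4))
    show "lo * chain_P \<pi>L f y x \<le> chain_P \<pi>H f y x" if "y \<in> Tr" "x \<in> {..<m}" for y x
    proof -
      have yx: "y < m" "x < m" using that Tr_sub by auto
      have "lo * chain_P \<pi>L f y x = (\<Sum>s\<in>UNIV. (lo * \<pi>L s) * f y s x)"
        unfolding chain_P_def by (simp add: sum_distrib_left mult.assoc)
      also have "\<dots> \<le> (\<Sum>s\<in>UNIV. \<pi>H s * f y s x)"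
        using rb(1) f_nn[OF yx] by (intro sum_mono mult_right_mono) auto
      finally show ?thesis unfolding chain_P_def .
    qed
    show "chain_P \<pi>H f y x \<le> hi * chain_P \<pi>L f y x" if "y \<in> Tr" "x \<in> {..<m}" for y x
    proof -
      have yx: "y < m" "x < m" using that Tr_sub by auto
      have "chain_P \<pi>H f y x = (\<Sum>s\<in>UNIV. \<pi>H s * f y s x)" unfolding chain_P_def ..
      also have "\<dots> \<le> (\<Sum>s\<in>UNIV. (hi * \<pi>L s) * f y s x)"
        using rb(2) f_nn[OF yx] by (intro sum_mono mult_right_mono) auto
      also have "\<dots> = hi * chain_P \<pi>L f y x"
        unfolding chain_P_def by (simp add: sum_distrib_left mult.assoc)
      finally show ?thesis .
    qed
    show "\<And>x. x \<in> {..<m} \<Longrightarrow> H.N i0 x = (if x = i0 then 1 else 0) + (\<Sum>y\<in>Tr. H.N i0 y * chain_P \<pi>H f y x)"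
      using H.balance[OF i0] by simp
    show "\<And>x. x \<in> {..<m} \<Longrightarrow> L.N i0 x = (if x = i0 then 1 else 0) + (\<Sum>y\<in>Tr. L.N i0 y * chain_P \<pi>L f y x)"
      using L.balance[OF i0] by simp
    show "\<And>x. x \<in> {..<m} \<Longrightarrow> (0 < H.N i0 x) = (0 < L.N i0 x)"
      using N_pos_iff[OF vH vL im] by simp
    show "\<And>S. S \<subseteq> Tr \<Longrightarrow> i0 \<notin> S \<Longrightarrow> \<exists>z\<in>S. 0 < L.N i0 z \<Longrightarrow>
            0 < (\<Sum>y\<in>Tr - S. \<Sum>x\<in>S. L.N i0 y * chain_P \<pi>L f y x)"
      using L.reach_in[OF i0] by blast
    show "\<And>S. S \<subseteq> Tr \<Longrightarrow> i0 \<notin> S \<Longrightarrow> \<exists>z\<in>S. 0 < H.N i0 z \<Longrightarrow>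
            0 < (\<Sum>y\<in>Tr - S. \<Sum>x\<in>S. H.N i0 y * chain_P \<pi>H f y x)"
      using H.reach_in[OF i0] by blast
  qed
  have hX: "h \<in> {..<m}" "h \<notin> Tr" and lX: "l \<in> {..<m}" "l \<notin> Tr" using hm lm unfolding Tr_def by auto
  have aH: "H.N i0 l = 1 - uH" using H.absorbed[OF i0] unfolding uH_def by simp
  have aL: "L.N i0 l = 1 - uL" using L.absorbed[OF i0] unfolding uL_def by simp
  have g: "gamma \<pi>H \<pi>L = hi / lo" unfolding gamma_def hi_def lo_def ..
  have ct: "card Tr = m - 2" by (rule card_Tr)
  have nnH: "0 \<le> uH" "0 \<le> H.N i0 l" unfolding uH_def using H.N_nn[OF im] by auto
  have nnL: "0 \<le> uL" "0 \<le> L.N i0 l" unfolding uL_def using L.N_nn[OF im] by auto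
  show "0 \<le> uH \<and> uH \<le> 1 \<and> 0 \<le> uL \<and> uL \<le> 1" using nnH nnL aH aL by auto
  show "uH * (1 - uL) \<le> gamma \<pi>H \<pi>L ^ (m - 2) * (uL * (1 - uH))"
    using odds_setup.odds(1)[OF os hX lX] aH aL g ct unfolding uH_def uL_def by simp
  show "m \<ge> 4 \<Longrightarrow> 0 < uL \<Longrightarrow> uL < 1 \<Longrightarrow> uH * (1 - uL) < gamma \<pi>H \<pi>L ^ (m - 2) * (uL * (1 - uH))"
  proof -
    assume m4: "m \<ge> 4" and u0: "0 < uL" and u1: "uL < 1"
    have "card Tr \<ge> 2" using ct m4 by simp
    then show ?thesis
      using odds_setup.odds(2)[OF os hX lX] aH aL g ct u0 u1 unfolding uH_def uL_def by simp
  qed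
  show "uL = 0 \<Longrightarrow> uH = 0"
    using N_pos_iff[OF vH vL im, of h] nnH nnL unfolding uH_def uL_def by auto
  show "uL = 1 \<Longrightarrow> uH = 1"
  proof -
    assume "uL = 1"
    then have "L.N i0 l = 0" using aL by simp
    then have "H.N i0 l = 0" using N_pos_iff[OF vH vL im, of l] nnH nnL by auto
    then show "uH = 1" using aH by simp
  qed
qed

end


lemma opt_half:
  fixes p G x y :: real
  assumes p: "1/2 \<le> p" "p < 1" and G1: "G \<ge> 1" and Gp: "(1-p)*G \<le> p"
    and x: "0 \<le> x" "x \<le> 1" and y: "0 \<le> y" "y \<le> 1"
    and con: "x*(1-y) \<le> G*(y*(1-x))"
  shows "p*x + (1-p)*(1-y) \<le> p"
proof -
  define A where "A = 1 + (G-1)*(1-x)"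
  have A1: "A \<ge> 1" unfolding A_def using G1 x by simp
  have yA: "x \<le> y * A" using con unfolding A_def by (simp add: algebra_simps)
  have Ax: "A - x = G*(1-x)" unfolding A_def by (simp add: algebra_simps)
  have "(1-p)*(1-y)*A = (1-p)*(A - y*A)" by (simp add: algebra_simps)
  also have "\<dots> \<le> (1-p)*(A - x)" using yA p by (intro mult_left_mono) auto
  also have "\<dots> = ((1-p)*G)*(1-x)" using Ax by simp
  also have "\<dots> \<le> p*(1-x)" using Gp x by (intro mult_right_mono) auto
  also have "\<dots> \<le> p*(1-x)*A"
  proof -
    have "p*(1-x) \<ge> 0" using p x by simp
    from mult_left_mono[OF A1 this] show ?thesis by simp
  qed
  finally have "(1-p)*(1-y)*A \<le> p*(1-x)*A" .
  then have "(1-p)*(1-y) \<le> p*(1-x)" using A1 by simp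
  then show ?thesis by (simp add: algebra_simps)
qed

lemma kappa_ge1: "0 < p \<Longrightarrow> p < 1 \<Longrightarrow> kappa p \<ge> 1"
  unfolding kappa_def by (cases "p \<le> 1/2") (auto simp: field_simps)

lemma opt_main:
  fixes p G x y :: real
  assumes p: "0 < p" "p < 1" and Gk: "G > kappa p"
    and x: "0 \<le> x" "x \<le> 1" and y: "0 \<le> y" "y \<le> 1"
    and con: "x*(1-y) \<le> G*(y*(1-x))"
  shows "p*x + (1-p)*(1-y) \<le> 1 - (2*sqrt(p*(1-p)*G) - 1)/(G-1)"
    and "(x*(1-y) < G*(y*(1-x)) \<or> (x = 0 \<and> y = 0) \<or> (x = 1 \<and> y = 1)) \<Longrightarrow>
         p*x + (1-p)*(1-y) < 1 - (2*sqrt(p*(1-p)*G) - 1)/(G-1)"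
proof -
  have G1: "G > 1" using kappa_ge1[OF p] Gk by simp
  define D where "D = G - 1"
  have D0: "D > 0" unfolding D_def using G1 by simp
  define A where "A = 1 + D*(1-x)"
  define B where "B = 1 + D*y"
  define \<Phi> where "\<Phi> = p*x + (1-p)*(1-y)"
  have A1: "A \<ge> 1" unfolding A_def using D0 x by simp
  have B1: "B \<ge> 1" unfolding B_def using D0 y by simp
  have ABG: "A*B - G = D*(y - x + D*y*(1-x))" unfolding A_def B_def D_def by (simp add: algebra_simps)
  have conD: "x*(1-y) - G*(y*(1-x)) = -(y - x + D*y*(1-x))" unfolding D_def by (simp add: algebra_simps)
  have sumAB: "p*A + (1-p)*B = 1 + D*(1 - \<Phi>)" unfolding A_def B_def \<Phi>_def by (simp add: algebra_simps)
  have pp: "p*(1-p) > 0" using p by simp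
  have sq: "(p*A + (1-p)*B)^2 = (p*A - (1-p)*B)^2 + 4*(p*(1-p))*(A*B)" by (simp add: power2_eq_square algebra_simps)
  have ABge: "A*B \<ge> G" using ABG conD con D0 by (smt (verit) mult_pos_pos mult_nonneg_nonneg)
  have S0: "p*A + (1-p)*B \<ge> 0" using A1 B1 p by (smt (verit) mult_pos_pos)
  have key: "2*sqrt(p*(1-p)*G) \<le> p*A + (1-p)*B \<Longrightarrow> \<Phi> \<le> 1 - (2*sqrt(p*(1-p)*G) - 1)/(G-1)"
  proof -
    assume "2*sqrt(p*(1-p)*G) \<le> p*A + (1-p)*B"
    then have "2*sqrt(p*(1-p)*G) - 1 \<le> D*(1-\<Phi>)" using sumAB by simp
    then have "(2*sqrt(p*(1-p)*G) - 1)/D \<le> 1 - \<Phi>" using D0 by (simp add: divide_le_eq mult.commute)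
    then show ?thesis unfolding D_def by simp
  qed
  have keys: "2*sqrt(p*(1-p)*G) < p*A + (1-p)*B \<Longrightarrow> \<Phi> < 1 - (2*sqrt(p*(1-p)*G) - 1)/(G-1)"
  proof -
    assume "2*sqrt(p*(1-p)*G) < p*A + (1-p)*B"
    then have "2*sqrt(p*(1-p)*G) - 1 < D*(1-\<Phi>)" using sumAB by simp
    then have "(2*sqrt(p*(1-p)*G) - 1)/D < 1 - \<Phi>" using D0 by (simp add: divide_less_eq mult.commute)
    then show ?thesis unfolding D_def by simp
  qed
  have sqrt2: "2*sqrt(p*(1-p)*G) = sqrt(4*(p*(1-p))*G)"
    by (simp add: real_sqrt_mult)
  have lb: "4*(p*(1-p))*G \<le> (p*A + (1-p)*B)^2"
  proof -
    have "4*(p*(1-p))*G \<le> 4*(p*(1-p))*(A*B)" using ABge pp by (intro mult_left_mono) auto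
    then show ?thesis using sq by (smt (verit) zero_le_power2)
  qed
  show "p*x + (1-p)*(1-y) \<le> 1 - (2*sqrt(p*(1-p)*G) - 1)/(G-1)"
  proof -
    have "sqrt(4*(p*(1-p))*G) \<le> p*A + (1-p)*B" using lb S0 by (simp add: real_le_lsqrt real_sqrt_le_iff)
    then show ?thesis using key sqrt2 unfolding \<Phi>_def by simp
  qed
  assume cases: "x*(1-y) < G*(y*(1-x)) \<or> (x = 0 \<and> y = 0) \<or> (x = 1 \<and> y = 1)"
  have slb: "4*(p*(1-p))*G < (p*A + (1-p)*B)^2"
  proof -
    consider (a) "x*(1-y) < G*(y*(1-x))" | (b) "x = 0 \<and> y = 0" | (c) "x = 1 \<and> y = 1" using cases by blast
    then show ?thesis
    proof cases
      case a
      then have "A*B > G" using ABG conD D0 by (smt (verit) mult_pos_pos)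
      then have "4*(p*(1-p))*G < 4*(p*(1-p))*(A*B)" using pp by (intro mult_strict_left_mono) auto
      then show ?thesis using sq by (smt (verit) zero_le_power2)
    next
      case b
      then have AB: "A = G" "B = 1" unfolding A_def B_def D_def by auto
      have "kappa p \<ge> (1-p)/p" unfolding kappa_def by simp
      then have "G > (1-p)/p" using Gk by simp
      then have "p*G > 1-p" using p by (simp add: field_simps)
      then have "(p*A - (1-p)*B)^2 > 0" using AB by simp
      moreover have "4*(p*(1-p))*G \<le> 4*(p*(1-p))*(A*B)" using ABge pp by (intro mult_left_mono) auto
      ultimately show ?thesis using sq by linarith
    next
      case c
      then have AB: "A = 1" "B = G" unfolding A_def B_def D_def by auto
      have "kappa p \<ge> p/(1-p)" unfolding kappa_def by simp
      then have "G > p/(1-p)" using Gk by simp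
      then have "(1-p)*G > p" using p by (simp add: field_simps)
      then have "(p*A - (1-p)*B)^2 > 0" using AB by simp
      moreover have "4*(p*(1-p))*G \<le> 4*(p*(1-p))*(A*B)" using ABge pp by (intro mult_left_mono) auto
      ultimately show ?thesis using sq by linarith
    qed
  qed
  have "sqrt(4*(p*(1-p))*G) < p*A + (1-p)*B" using slb S0 by (simp add: real_sqrt_less_iff real_less_lsqrt)
  then show "p*x + (1-p)*(1-y) < 1 - (2*sqrt(p*(1-p)*G) - 1)/(G-1)"
    using keys sqrt2 unfolding \<Phi>_def by simp
qed


lemma URR_bound:
  fixes p \<gamma> x y :: real and m :: nat
  defines "G \<equiv> \<gamma> ^ (m - 2)"
  assumes p: "0 < p" "p < 1" and G1: "G \<ge> 1"
    and x: "0 \<le> x" "x \<le> 1" and y: "0 \<le> y" "y \<le> 1"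
    and con: "x*(1-y) \<le> G*(y*(1-x))"
  shows "p*x + (1-p)*(1-y) \<le> URR p \<gamma> m"
    and "G > kappa p \<Longrightarrow> (x*(1-y) < G*(y*(1-x)) \<or> (x = 0 \<and> y = 0) \<or> (x = 1 \<and> y = 1)) \<Longrightarrow>
         p*x + (1-p)*(1-y) < URR p \<gamma> m"
proof -
  show "G > kappa p \<Longrightarrow> (x*(1-y) < G*(y*(1-x)) \<or> (x = 0 \<and> y = 0) \<or> (x = 1 \<and> y = 1)) \<Longrightarrow>
         p*x + (1-p)*(1-y) < URR p \<gamma> m"
    using opt_main(2)[OF p _ x y con] unfolding URR_def G_def by simp
  show "p*x + (1-p)*(1-y) \<le> URR p \<gamma> m"
  proof (cases "G > kappa p")
    case True
    then show ?thesis using opt_main(1)[OF p True x y con] unfolding URR_def G_def by simp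
  next
    case False
    then have GK: "G \<le> kappa p" by simp
    have "p*x + (1-p)*(1-y) \<le> max p (1-p)"
    proof (cases "1/2 \<le> p")
      case True
      have "(1-p)/p \<le> p/(1-p)" using True p by (simp add: field_simps)
      then have "kappa p = p/(1-p)" unfolding kappa_def by simp
      then have "(1-p)*G \<le> (1-p)*(p/(1-p))" using GK p by (intro mult_left_mono) auto
      then have "(1-p)*G \<le> p" using p by simp
      then have "p*x + (1-p)*(1-y) \<le> p" using opt_half[OF True p(2) G1 _ x y con] by simp
      then show ?thesis by simp
    next
      case False
      have q: "1/2 \<le> 1-p" "1-p < 1" using False p by auto
      have "p/(1-p) \<le> (1-p)/p" using False p by (simp add: field_simps)
      then have "kappa p = (1-p)/p" unfolding kappa_def by simp
      then have "p*G \<le> p*((1-p)/p)" using GK p by (intro mult_left_mono) auto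
      then have Gp': "(1-(1-p))*G \<le> 1-p" using p by simp
      have c2: "(1-y)*(1-(1-x)) \<le> G*((1-x)*(1-(1-y)))" using con by (simp add: algebra_simps)
      have "(1-p)*(1-y) + (1-(1-p))*(1-(1-x)) \<le> 1-p"
        by (rule opt_half[OF q G1 Gp']) (use x y c2 in auto)
      then show ?thesis by (simp add: algebra_simps)
    qed
    then show ?thesis using False unfolding URR_def G_def by simp
  qed
qed


lemma edges_eq_gen:
  assumes vp: "valid_signal_dist \<pi>" and fnn: "\<And>i s k. i < m \<Longrightarrow> k < m \<Longrightarrow> f i s k \<ge> 0"
  shows "chain_edges m \<pi> f = edges0 m f"
proof -
  have pi_pos: "\<pi> s > 0" for s using vp unfolding valid_signal_dist_def by auto
  have "chain_P \<pi> f i k > 0 \<longleftrightarrow> (\<exists>s. f i s k > 0)" if i: "i < m" and k: "k < m" for i k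
  proof -
    have nn: "\<And>s. \<pi> s * f i s k \<ge> 0" using pi_pos fnn[OF i k] by (simp add: less_imp_le)
    have "chain_P \<pi> f i k \<noteq> 0 \<longleftrightarrow> (\<exists>s. \<pi> s * f i s k \<noteq> 0)"
      unfolding chain_P_def using sum_nonneg_eq_0_iff[of UNIV "\<lambda>s. \<pi> s * f i s k"] nn by auto
    moreover have "(\<pi> s * f i s k \<noteq> 0) \<longleftrightarrow> f i s k > 0" for s using pi_pos[of s] fnn[OF i k, of s] by auto
    moreover have "chain_P \<pi> f i k \<ge> 0" unfolding chain_P_def using nn by (intro sum_nonneg) auto
    ultimately show ?thesis by auto
  qed
  then show ?thesis unfolding chain_edges_def edges0_def by auto
qed

theorem corollary3:
  fixes p :: real and m :: nat
    and \<pi>H \<pi>L :: "'s::finite \<Rightarrow> real"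
    and f :: "nat \<Rightarrow> 's \<Rightarrow> nat \<Rightarrow> real" and g a :: "nat \<Rightarrow> real"
    and \<sigma> :: "nat \<Rightarrow> bool \<Rightarrow> real"
  assumes "0 < p" and "p < 1"
    and "valid_signal_dist \<pi>H" and "valid_signal_dist \<pi>L" and "\<pi>H \<noteq> \<pi>L"
    and "valid_protocol m f g a"
    and "parsimonious m \<pi>H f a"
    and "sender_best_response m \<pi>H \<pi>L f g a \<sigma>"
  shows "receiver_payoff p m \<pi>H \<pi>L f g a \<sigma> \<le> URR p (gamma \<pi>H \<pi>L) m
         \<and> (m \<ge> 4 \<and> gamma \<pi>H \<pi>L ^ (m - 2) > kappa p
              \<longrightarrow> receiver_payoff p m \<pi>H \<pi>L f g a \<sigma> < URR p (gamma \<pi>H \<pi>L) m)"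
proof -
  note p = assms(1,2) and vH = assms(3) and vL = assms(4) and neq = assms(5)
  have vprot: "valid_protocol m f g a" and pars: "parsimonious m \<pi>H f a"
    and br: "sender_best_response m \<pi>H \<pi>L f g a \<sigma>" using assms by auto
  obtain h l where hm: "h < m" and lm: "l < m" and hl: "h \<noteq> l" and absh: "absorbing f h"
    and absl: "absorbing f l" and ah: "a h = 1" and al: "a l = 0"
    and rest: "\<And>j. j < m \<Longrightarrow> j \<noteq> h \<Longrightarrow> j \<noteq> l \<Longrightarrow> \<not> absorbing f j \<and> transient m \<pi>H f j \<and> a j = 0"
    using pars unfolding parsimonious_def by blast
  have fnn: "\<And>i s k. i < m \<Longrightarrow> k < m \<Longrightarrow> f i s k \<ge> 0" and frow: "\<And>i s. i < m \<Longrightarrow> (\<Sum>k<m. f i s k) = 1"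
    and gnn: "\<And>j. j < m \<Longrightarrow> g j \<ge> 0" and gs: "(\<Sum>j<m. g j) = 1"
    and arng: "\<And>j. j < m \<Longrightarrow> 0 \<le> a j \<and> a j \<le> 1"
    using vprot unfolding valid_protocol_def by auto
  have E: "chain_edges m \<pi>H f = edges0 m f" by (rule edges_eq_gen[OF vH fnn])
  interpret proto m f h l
  proof
    show "\<And>j. j < m \<Longrightarrow> j \<noteq> h \<Longrightarrow> j \<noteq> l \<Longrightarrow> \<not> absorbing f j" using rest by blast
    show "\<And>j. j < m \<Longrightarrow> j \<noteq> h \<Longrightarrow> j \<noteq> l \<Longrightarrow> \<exists>k. (j, k) \<in> (edges0 m f)\<^sup>* \<and> (k, j) \<notin> (edges0 m f)\<^sup>*"
      using rest E unfolding transient_def by metis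
  qed (use hm lm hl absh absl fnn frow in auto)
  interpret H: proto_pi m f h l \<pi>H by (rule pp[OF vH])
  interpret L: proto_pi m f h l \<pi>L by (rule pp[OF vL])
  have a0: "\<And>j. j < m \<Longrightarrow> j \<noteq> h \<Longrightarrow> a j = 0" using rest al by metis
  have sT: "\<And>j. j < m \<Longrightarrow> 0 \<le> \<sigma> j True \<and> \<sigma> j True \<le> 1"
    and sF: "\<And>j. j < m \<Longrightarrow> 0 \<le> \<sigma> j False \<and> \<sigma> j False \<le> 1"
    using br unfolding sender_best_response_def valid_strategy_def by auto
  have s0: "\<And>j. j < m \<Longrightarrow> 0 \<le> (0::real) \<and> (0::real) \<le> 1" by simp
  define uH where "uH i = H.N i h" for i
  define uL where "uL i = L.N i h" for i
  define \<Phi> where "\<Phi> i = p * uH i + (1 - p) * (1 - uL i)" for i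
  have X: "prob_actH m \<pi>H f g a (\<lambda>j. \<sigma> j True) \<le> (\<Sum>i<m. g i * uH i)"
    using H.actH_le0[where g=g and a=a and sg="\<lambda>j. \<sigma> j True", OF gnn gs sT ah a0] H.C_h_lin[where g=g, OF gnn gs] unfolding uH_def by simp
  have "sender_payoff m \<pi>H \<pi>L f g a (\<lambda>_ _. 0) False \<le> sender_payoff m \<pi>H \<pi>L f g a \<sigma> False"
    using br unfolding sender_best_response_def valid_strategy_def by auto
  then have brL: "prob_actH m \<pi>L f g a (\<lambda>_. 0) \<le> prob_actH m \<pi>L f g a (\<lambda>j. \<sigma> j False)"
    unfolding sender_payoff_def by simp
  have "prob_actH m \<pi>L f g a (\<lambda>_. 0) = (\<Sum>t. L.C g t h)" by (rule L.actH_eq[where a=a and g=g and sg="\<lambda>_. 0", OF ah a0])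
  also have "\<dots> = (\<Sum>i<m. g i * uL i)" using L.C_h_lin[where g=g, OF gnn gs] unfolding uL_def by simp
  finally have Y: "prob_actL m \<pi>L f g a (\<lambda>j. \<sigma> j False) \<le> 1 - (\<Sum>i<m. g i * uL i)"
    using L.actHL_le[where g=g and sg="\<lambda>j. \<sigma> j False" and a=a, OF gnn gs sF arng] brL by simp
  have recv: "receiver_payoff p m \<pi>H \<pi>L f g a \<sigma> \<le> (\<Sum>i<m. g i * \<Phi> i)"
  proof -
    have "receiver_payoff p m \<pi>H \<pi>L f g a \<sigma> \<le> p * (\<Sum>i<m. g i * uH i) + (1 - p) * (1 - (\<Sum>i<m. g i * uL i))"
      unfolding receiver_payoff_def using X Y p by (intro add_mono mult_left_mono) auto
    also have "\<dots> = (\<Sum>i<m. g i * \<Phi> i)"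
    proof -
      have "(\<Sum>i<m. g i * \<Phi> i) = (\<Sum>i<m. p * (g i * uH i) + (1-p) * g i - (1-p) * (g i * uL i))"
        unfolding \<Phi>_def by (intro sum.cong refl) (simp add: algebra_simps)
      also have "\<dots> = p * (\<Sum>i<m. g i * uH i) + (1-p) * (\<Sum>i<m. g i) - (1-p) * (\<Sum>i<m. g i * uL i)"
        by (simp add: sum.distrib sum_subtractf sum_distrib_left)
      finally show ?thesis using gs by (simp add: algebra_simps)
    qed
    finally show ?thesis .
  qed
  define G where "G = gamma \<pi>H \<pi>L ^ (m - 2)"
  have rb: "0 < lunder \<pi>H \<pi>L" "lunder \<pi>H \<pi>L < lbar \<pi>H \<pi>L" using ratio_bounds[OF vH vL neq] by auto
  have gam1: "gamma \<pi>H \<pi>L \<ge> 1" unfolding gamma_def using rb by simp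
  have G1: "G \<ge> 1" unfolding G_def using gam1 by (simp add: one_le_power)
  have per: "\<Phi> i \<le> URR p (gamma \<pi>H \<pi>L) m \<and> (m \<ge> 4 \<and> G > kappa p \<longrightarrow> \<Phi> i < URR p (gamma \<pi>H \<pi>L) m)"
    if i: "i < m" for i
  proof -
    consider (hh) "i = h" | (ll) "i = l" | (tt) "i \<in> Tr" using i unfolding Tr_def by auto
    then show ?thesis
    proof cases
      case hh
      have "uH i = 1" "uL i = 1" unfolding uH_def uL_def hh using H.N_abs L.N_abs by auto
      then show ?thesis unfolding \<Phi>_def
        using URR_bound[of p "gamma \<pi>H \<pi>L" m 1 1] p G1 unfolding G_def by auto
    next
      case ll
      have "uH i = 0" "uL i = 0" unfolding uH_def uL_def ll using H.N_abs L.N_abs by auto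
      then show ?thesis unfolding \<Phi>_def
        using URR_bound[of p "gamma \<pi>H \<pi>L" m 0 0] p G1 unfolding G_def by auto
    next
      case tt
      note T = transient_odds[OF vH vL neq tt, folded uH_def uL_def]
      have rng: "0 \<le> uH i" "uH i \<le> 1" "0 \<le> uL i" "uL i \<le> 1" using T(1) by auto
      have con: "uH i * (1 - uL i) \<le> G * (uL i * (1 - uH i))" using T(2) unfolding G_def .
      have le: "\<Phi> i \<le> URR p (gamma \<pi>H \<pi>L) m"
        unfolding \<Phi>_def using URR_bound(1)[OF p _ rng con[unfolded G_def]] G1 unfolding G_def by simp
      have lt: "\<Phi> i < URR p (gamma \<pi>H \<pi>L) m" if m4: "m \<ge> 4" and Gk: "G > kappa p"
      proof -
        have c: "uH i * (1 - uL i) < G * (uL i * (1 - uH i)) \<or> (uH i = 0 \<and> uL i = 0) \<or> (uH i = 1 \<and> uL i = 1)"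
        proof (cases "uL i = 0")
          case True then show ?thesis using T(4) by auto
        next
          case False
          show ?thesis
          proof (cases "uL i = 1")
            case True then show ?thesis using T(5) by auto
          next
            case False2: False
            have "0 < uL i" "uL i < 1" using False False2 rng by auto
            then show ?thesis using T(3)[OF m4] unfolding G_def by auto
          qed
        qed
        show ?thesis unfolding \<Phi>_def
          using URR_bound(2)[OF p _ rng con[unfolded G_def]] G1 Gk c unfolding G_def by simp
      qed
      show ?thesis using le lt by auto
    qed
  qed
  have le: "(\<Sum>i<m. g i * \<Phi> i) \<le> URR p (gamma \<pi>H \<pi>L) m"
  proof -
    have "(\<Sum>i<m. g i * \<Phi> i) \<le> (\<Sum>i<m. g i * URR p (gamma \<pi>H \<pi>L) m)"
      using per gnn by (intro sum_mono mult_left_mono) auto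
    also have "\<dots> = URR p (gamma \<pi>H \<pi>L) m" using gs by (simp add: sum_distrib_right[symmetric])
    finally show ?thesis .
  qed
  have lt: "(\<Sum>i<m. g i * \<Phi> i) < URR p (gamma \<pi>H \<pi>L) m" if m4: "m \<ge> 4" and Gk: "G > kappa p"
  proof -
    obtain i where i: "i < m" "g i > 0"
    proof (rule ccontr)
      assume "\<not> thesis"
      then have "\<forall>i<m. g i \<le> 0" using that by (meson not_le)
      then have "(\<Sum>i<m. g i) \<le> 0" by (intro sum_nonpos) auto
      then show False using gs by simp
    qed
    have "(\<Sum>i<m. g i * \<Phi> i) < (\<Sum>i<m. g i * URR p (gamma \<pi>H \<pi>L) m)"
    proof (rule sum_strict_mono_ex1)
      show "finite {..<m}" by simp
      show "\<forall>x\<in>{..<m}. g x * \<Phi> x \<le> g x * URR p (gamma \<pi>H \<pi>L) m"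
        using per gnn by (auto intro: mult_left_mono)
      show "\<exists>a\<in>{..<m}. g a * \<Phi> a < g a * URR p (gamma \<pi>H \<pi>L) m"
        using per[OF i(1)] i m4 Gk by (intro bexI[of _ i]) auto
    qed
    also have "\<dots> = URR p (gamma \<pi>H \<pi>L) m" using gs by (simp add: sum_distrib_right[symmetric])
    finally show ?thesis .
  qed
  show ?thesis using recv le lt unfolding G_def by fastforce
qed


end
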